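(* Let $I_{-1}:=\iint_T\frac{dx\,dy}{xy(-\ln xy)}$ and, for $n\ge0$, $I_n:=\iint_T \frac{(-\ln xy)^n}{xy}\,dx\,dy$. Then \[ I_{-1}=\sum_{n=0}^\infty(-1)^n\frac{I_n}{(n+1)!}+\int_0^1\frac{\operatorname{li}(x-x^2)}{x}\,dx+1, \] where the series converges.
   Context: $T:=\{(x,y)\in[0,1]^2 : x+y\ge 1\}$. The logarithmic integral is $\operatorname{li}(u):=\int_0^u\frac{dv}{\ln v}$ for $0<u<1$. *)

theory Defs
  imports "HOL-Analysis.Analysis"
begin

definition T_set :: "(real \<times> real) set" where
  "T_set = {(x, y). 0 \<le> x \<and> x \<le> 1 \<and> 0 \<le> y \<and> y \<le> 1 \<and> x + y \<ge> 1}"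

text \<open>Logarithmic integral li(u) = int_0^u dv / ln v (meant for 0 < u < 1).\<close>
definition li :: "real \<Rightarrow> real" where
  "li u = (LBINT v=0..u. 1 / ln v)"

definition f_neg1 :: "real \<times> real \<Rightarrow> real" where
  "f_neg1 = (\<lambda>(x, y). 1 / (x * y * (- ln (x * y))))"

definition f_n :: "nat \<Rightarrow> real \<times> real \<Rightarrow> real" where
  "f_n n = (\<lambda>(x, y). (- ln (x * y)) ^ n / (x * y))"

definition I_neg1 :: real where
  "I_neg1 = (LINT z:T_set|lborel. f_neg1 z)"

definition I_n :: "nat \<Rightarrow> real" where
  "I_n n = (LINT z:T_set|lborel. f_n n z)"

end

theory Submission imports Defs "HOL-Probability.Distributions" begin


lemma nn_inv_Icc:
  fixes a b :: real assumes "0 < a" "a \<le> b"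
  shows "(\<integral>\<^sup>+x. ennreal (indicator {a..b} x / x) \<partial>lborel) = ennreal (ln b - ln a)"
proof -
  have "((\<lambda>x. 1 / x) has_integral (ln b - ln a)) {a..b}"
  proof (rule fundamental_theorem_of_calculus[OF assms(2)])
    fix x assume "x \<in> {a..b}"
    then have "x > 0" using assms by auto
    then show "(ln has_vector_derivative 1 / x) (at x within {a..b})"
      by (auto intro!: derivative_eq_intros simp: has_real_derivative_iff_has_vector_derivative[symmetric])
  qed
  then have "integral\<^sup>N lborel (\<lambda>x. indicator {a..b} x * (1 / x)) = ennreal (ln b - ln a)"
    by (intro nn_integral_has_integral_lebesgue) (use assms in auto)
  then show ?thesis by (simp add: divide_inverse)
qed



definition Wt :: "real \<Rightarrow> real" where
  "Wt t = (if t \<le> 0 then 0 else if 1/4 \<le> exp (-t) then t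
           else 2 * ln (2 / (1 + sqrt (1 - 4 * exp (-t)))))"

lemma nn_inv_Icc_AE:
  fixes a b :: real assumes "0 < a" "a \<le> b" and ae: "AE x in lborel. indicator S x = (indicator {a..b} x :: real)"
  shows "(\<integral>\<^sup>+x. ennreal (indicator S x / x) \<partial>lborel) = ennreal (ln b - ln a)"
proof -
  have "(\<integral>\<^sup>+x. ennreal (indicator S x / x) \<partial>lborel) = (\<integral>\<^sup>+x. ennreal (indicator {a..b} x / x) \<partial>lborel)"
    by (rule nn_integral_cong_AE) (use ae in auto)
  then show ?thesis using nn_inv_Icc[OF assms(1,2)] by simp
qed

lemma W_eq:
  fixes t :: real assumes t: "t > 0"
  shows "(\<integral>\<^sup>+x. ennreal (indicator {x. 0 < x \<and> x < 1 \<and> x - x^2 \<le> exp (-t) \<and> exp (-t) \<le> x} x / x) \<partial>lborel)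
         = ennreal (Wt t)"
proof -
  define s where "s = exp (-t)"
  have s0: "0 < s" and s1: "s < 1" using t by (auto simp: s_def)
  let ?S = "{x. 0 < x \<and> x < 1 \<and> x - x^2 \<le> s \<and> s \<le> x}"
  show ?thesis
  proof (cases "1/4 \<le> s")
    case True
    have q: "x - x^2 \<le> s" for x :: real
    proof -
      have "x - x^2 \<le> 1/4" using sum_squares_ge_zero[of "x - 1/2" 0] by (simp add: power2_eq_square algebra_simps)
      then show ?thesis using True by linarith
    qed
    have "AE x in lborel. indicator ?S x = (indicator {s..1} x :: real)"
      using AE_lborel_singleton[of 1] by eventually_elim (use q s0 in \<open>auto simp: indicator_def\<close>)
    from nn_inv_Icc_AE[OF s0 _ this] s1
    have "(\<integral>\<^sup>+x. ennreal (indicator ?S x / x) \<partial>lborel) = ennreal (- ln s)" by simp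
    also have "- ln s = Wt t" using True t by (simp add: Wt_def s_def)
    finally show ?thesis by (simp add: s_def)
  next
    case False
    define q where "q = sqrt (1 - 4 * s)"
    have q0: "0 < q" and q1: "q < 1" using False s0 by (auto simp: q_def real_sqrt_lt_1_iff)
    have qq: "q^2 = 1 - 4 * s" using False by (simp add: q_def)
    define r1 where "r1 = (1 - q) / 2"
    define r2 where "r2 = (1 + q) / 2"
    have r1': "r1 = 2 * s / (1 + q)"
    proof -
      have "(1 - q) * (1 + q) = 4 * s" using qq by (simp add: power2_eq_square algebra_simps)
      then show ?thesis unfolding r1_def using q0 by (simp add: field_simps)
    qed
    have sr1: "s \<le> r1"
    proof -
      have "s * (1 + q) \<le> 2 * s" using q1 s0 by (simp add: algebra_simps)
      then show ?thesis unfolding r1' using q0 by (simp add: pos_le_divide_eq)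
    qed
    have r12: "r1 < r2" using q0 by (simp add: r1_def r2_def)
    have r21: "r2 < 1" using q1 by (simp add: r2_def)
    have key: "x - x^2 \<le> s \<longleftrightarrow> x \<le> r1 \<or> r2 \<le> x" for x :: real
    proof -
      have seq: "s = (1 - q^2) / 4" using qq by simp
      have "x - x^2 - s = - ((x - r1) * (x - r2))"
        unfolding seq by (simp add: r1_def r2_def power2_eq_square field_simps)
      then have "x - x^2 \<le> s \<longleftrightarrow> 0 \<le> (x - r1) * (x - r2)" by linarith
      also have "\<dots> \<longleftrightarrow> x \<le> r1 \<or> r2 \<le> x" using r12
        by (auto simp: zero_le_mult_iff)
      finally show ?thesis .
    qed
    have AE1: "AE x in lborel. ennreal (indicator ?S x / x) = ennreal (indicator {s..r1} x / x) + ennreal (indicator {r2..1} x / x)"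
      using AE_lborel_singleton[of 1] proof eventually_elim
      case (elim x)
      show ?case
      proof (cases "x \<in> ?S")
        case True
        then have "x \<in> {s..r1} \<and> x \<notin> {r2..1} \<or> x \<notin> {s..r1} \<and> x \<in> {r2..1}"
          using key[of x] r12 by auto
        then show ?thesis using True by (auto simp: indicator_def)
      next
        case False
        then have "x \<notin> {s..r1} \<and> x \<notin> {r2..1}" using key[of x] elim s0 sr1 r12 r21 by auto
        then show ?thesis using False by (auto simp: indicator_def)
      qed
    qed
    have "(\<integral>\<^sup>+x. ennreal (indicator ?S x / x) \<partial>lborel)
        = (\<integral>\<^sup>+x. ennreal (indicator {s..r1} x / x) + ennreal (indicator {r2..1} x / x) \<partial>lborel)"
      by (rule nn_integral_cong_AE[OF AE1])
    also have "\<dots> = (\<integral>\<^sup>+x. ennreal (indicator {s..r1} x / x) \<partial>lborel) + (\<integral>\<^sup>+x. ennreal (indicator {r2..1} x / x) \<partial>lborel)"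
      by (rule nn_integral_add) auto
    also have "\<dots> = ennreal (ln r1 - ln s) + ennreal (ln 1 - ln r2)"
      using nn_inv_Icc[OF s0 sr1] nn_inv_Icc[of r2 1] r21 r12 sr1 s0 by simp
    also have "\<dots> = ennreal ((ln r1 - ln s) + (ln 1 - ln r2))"
      using sr1 r21 s0 r12 by (subst ennreal_plus) auto
    also have "(ln r1 - ln s) + (ln 1 - ln r2) = Wt t"
    proof -
      have "ln r1 = ln 2 + ln s - ln (1 + q)" unfolding r1' using s0 q0
        by (simp add: ln_div ln_mult)
      moreover have "ln r2 = ln (1 + q) - ln 2" unfolding r2_def using q0 by (simp add: ln_div)
      moreover have "Wt t = 2 * (ln 2 - ln (1 + q))" using False t q0
        by (simp add: Wt_def s_def[symmetric] q_def[symmetric] ln_div)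
      ultimately show ?thesis by simp
    qed
    finally show ?thesis by (simp add: s_def)
  qed
qed



lemma T_set_borel[measurable]: "T_set \<in> sets (borel :: (real \<times> real) measure)"
proof -
  have "T_set = {z\<in>space (borel \<Otimes>\<^sub>M borel). 0 \<le> fst z \<and> fst z \<le> 1 \<and> 0 \<le> snd z \<and> snd z \<le> 1 \<and> 1 \<le> fst z + snd z}"
    by (auto simp: T_set_def space_pair_measure)
  also have "\<dots> \<in> sets (borel \<Otimes>\<^sub>M borel)" by measurable
  finally show ?thesis by (metis borel_prod)
qed

lemma T_set_lborel2[measurable]: "T_set \<in> sets (lborel \<Otimes>\<^sub>M lborel :: (real \<times> real) measure)"
proof -
  have "T_set = {z\<in>space (lborel \<Otimes>\<^sub>M lborel). 0 \<le> fst z \<and> fst z \<le> (1::real) \<and> 0 \<le> snd z \<and> snd z \<le> (1::real) \<and> 1 \<le> fst z + snd z}"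
    by (auto simp: T_set_def space_pair_measure)
  also have "\<dots> \<in> sets (lborel \<Otimes>\<^sub>M lborel)" by measurable
  finally show ?thesis .
qed

lemma inner_subst:
  fixes h :: "real \<Rightarrow> real" and x :: real
  assumes [measurable]: "h \<in> borel_measurable borel" and nn: "\<And>t. 0 \<le> h t"
    and x: "0 < x" "x < 1"
  shows "(\<integral>\<^sup>+y. ennreal (indicator T_set (x, y) / (x * y) * h (- ln (x * y))) \<partial>lborel)
       = (\<integral>\<^sup>+t. ennreal (h t / x * indicator {- ln x .. - ln (x * (1 - x))} t) \<partial>lborel)"
proof -
  define f where "f u = h (- u) / x" for u
  have [measurable]: "f \<in> borel_measurable borel" unfolding f_def by measurable
  have a: "1 - x \<le> 1" using x by simp
  have "(\<integral>\<^sup>+y. ennreal (indicator T_set (x, y) / (x * y) * h (- ln (x * y))) \<partial>lborel)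
      = (\<integral>\<^sup>+y. ennreal (f (ln (x * y)) * (1 / y) * indicator {1 - x..1} y) \<partial>lborel)"
  proof (rule nn_integral_cong)
    fix y :: real
    show "ennreal (indicator T_set (x, y) / (x * y) * h (- ln (x * y))) = ennreal (f (ln (x * y)) * (1 / y) * indicator {1 - x..1} y)"
      using x by (auto simp: T_set_def indicator_def f_def field_simps)
  qed
  also have "\<dots> = (\<integral>\<^sup>+u. f u * indicator {ln (x * (1 - x))..ln (x * 1)} u \<partial>lborel)"
  proof (subst nn_integral_substitution[where g = "\<lambda>y. ln (x * y)" and g' = "\<lambda>y. 1 / y" and a = "1 - x" and b = 1 and f = f])
    show "set_borel_measurable borel {ln (x * (1 - x))..ln (x * 1)} f"
      unfolding set_borel_measurable_def by measurable
    fix y assume y: "y \<in> {1 - x..1}"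
    then have "y > 0" using x by auto
    then show "((\<lambda>y. ln (x * y)) has_real_derivative 1 / y) (at y)"
      using x by (auto intro!: derivative_eq_intros simp: field_simps)
    show "0 \<le> 1 / y" using \<open>y > 0\<close> by simp
  next
    show "continuous_on {1 - x..1} (\<lambda>y. 1 / y)"
      using x by (intro continuous_intros) auto
  next
    show "1 - x \<le> 1" using x by simp
  next
    show "(\<integral>\<^sup>+ y. ennreal (f (ln (x * y)) * (1 / y) * indicator {1 - x..1} y) \<partial>lborel) =
    (\<integral>\<^sup>+ y. ennreal (f (ln (x * y)) * (1 / y) * indicator {1 - x..1} y) \<partial>lborel)" ..
  qed
  also have "\<dots> = (\<integral>\<^sup>+u. ennreal (f u * indicator {ln (x * (1 - x))..ln x} u) \<partial>lborel)"
    by (intro nn_integral_cong) (auto simp: indicator_def)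
  also have "\<dots> = (\<integral>\<^sup>+t. ennreal (f (- t) * indicator {ln (x * (1 - x))..ln x} (- t)) \<partial>lborel)"
    using nn_integral_real_affine[of "\<lambda>u. ennreal (f u * indicator {ln (x * (1 - x))..ln x} u)" "-1" 0]
    by simp
  also have "\<dots> = (\<integral>\<^sup>+t. ennreal (h t / x * indicator {- ln x .. - ln (x * (1 - x))} t) \<partial>lborel)"
    by (intro nn_integral_cong) (auto simp: indicator_def f_def)
  finally show ?thesis .
qed



lemma pushA:
  fixes h :: "real \<Rightarrow> real"
  assumes hm[measurable]: "h \<in> borel_measurable borel" and nn: "\<And>t. 0 \<le> h t"
  shows "(\<integral>\<^sup>+z. ennreal (indicator T_set z / (fst z * snd z) * h (- ln (fst z * snd z))) \<partial>lborel)
       = (\<integral>\<^sup>+t. ennreal (Wt t * h t) \<partial>lborel)"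
proof -
  define K where "K x t = ennreal (if 0 < x \<and> x < 1 \<and> - ln x \<le> t \<and> t \<le> - ln (x * (1 - x)) then h t / x else 0)"
    for x t :: real
  have Km[measurable]: "case_prod K \<in> borel_measurable (lborel \<Otimes>\<^sub>M lborel)"
    unfolding K_def by measurable
  have "(\<integral>\<^sup>+z. ennreal (indicator T_set z / (fst z * snd z) * h (- ln (fst z * snd z))) \<partial>lborel)
      = (\<integral>\<^sup>+z. ennreal (indicator T_set z / (fst z * snd z) * h (- ln (fst z * snd z))) \<partial>(lborel \<Otimes>\<^sub>M lborel))"
    by (simp only: lborel_prod)
  also have "\<dots> = (\<integral>\<^sup>+x. \<integral>\<^sup>+y. ennreal (indicator T_set (x, y) / (x * y) * h (- ln (x * y))) \<partial>lborel \<partial>lborel)"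
    by (subst lborel.nn_integral_fst[symmetric]) (auto simp: lborel_prod[symmetric])
  also have "\<dots> = (\<integral>\<^sup>+x. \<integral>\<^sup>+t. K x t \<partial>lborel \<partial>lborel)"
  proof (rule nn_integral_cong_AE)
    show "AE x in lborel. (\<integral>\<^sup>+y. ennreal (indicator T_set (x, y) / (x * y) * h (- ln (x * y))) \<partial>lborel) = (\<integral>\<^sup>+t. K x t \<partial>lborel)"
      using AE_lborel_singleton[of 1]
    proof eventually_elim
      case (elim x)
      show ?case
      proof (cases "0 < x \<and> x < 1")
        case True
        then show ?thesis
          by (subst inner_subst[OF hm nn]) (auto intro!: nn_integral_cong simp: K_def indicator_def)
      next
        case False
        then have "x \<le> 0 \<or> 1 < x" using elim by auto
        then have "ennreal (indicator T_set (x, y) / (x * y) * h (- ln (x * y))) = 0" for y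
          by (cases "x = 0") (auto simp: T_set_def indicator_def)
        moreover have "K x t = 0" for t using False by (auto simp: K_def)
        ultimately show ?thesis by simp
      qed
    qed
  qed
  also have "\<dots> = (\<integral>\<^sup>+t. \<integral>\<^sup>+x. K x t \<partial>lborel \<partial>lborel)"
    by (rule lborel_pair.Fubini'[symmetric]) (use Km in simp)
  also have "\<dots> = (\<integral>\<^sup>+t. ennreal (Wt t * h t) \<partial>lborel)"
  proof (rule nn_integral_cong)
    fix t :: real
    show "(\<integral>\<^sup>+x. K x t \<partial>lborel) = ennreal (Wt t * h t)"
    proof (cases "t > 0")
      case False
      have "K x t = 0" for x
      proof -
        have "\<not> (0 < x \<and> x < 1 \<and> - ln x \<le> t)"
          using False ln_less_zero[of x] by linarith
        then show ?thesis by (auto simp: K_def)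
      qed
      then show ?thesis using False by (simp add: Wt_def)
    next
      case True
      have "K x t = ennreal (h t) * ennreal (indicator {x. 0 < x \<and> x < 1 \<and> x - x^2 \<le> exp (-t) \<and> exp (-t) \<le> x} x / x)" for x
      proof (cases "0 < x \<and> x < 1")
        case True
        then have p: "0 < x * (1 - x)" by simp
        have "- ln x \<le> t \<longleftrightarrow> exp (-t) \<le> x" using True
          by (metis exp_le_cancel_iff exp_ln minus_le_iff)
        moreover have "t \<le> - ln (x * (1 - x)) \<longleftrightarrow> x - x^2 \<le> exp (-t)"
        proof -
          have "t \<le> - ln (x * (1 - x)) \<longleftrightarrow> ln (x * (1 - x)) \<le> -t" by linarith
          also have "\<dots> \<longleftrightarrow> x * (1 - x) \<le> exp (-t)" using p
            by (metis exp_le_cancel_iff exp_ln)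
          finally show ?thesis by (simp add: power2_eq_square algebra_simps)
        qed
        ultimately show ?thesis using True nn[of t]
          by (auto simp: K_def indicator_def ennreal_mult[symmetric] divide_inverse)
      next
        case False
        then show ?thesis by (auto simp: K_def indicator_def)
      qed
      then have "(\<integral>\<^sup>+x. K x t \<partial>lborel) = ennreal (h t) * (\<integral>\<^sup>+x. ennreal (indicator {x. 0 < x \<and> x < 1 \<and> x - x^2 \<le> exp (-t) \<and> exp (-t) \<le> x} x / x) \<partial>lborel)"
        by (simp add: nn_integral_cmult)
      also have "\<dots> = ennreal (h t) * ennreal (Wt t)" using W_eq[OF True] by simp
      also have "\<dots> = ennreal (Wt t * h t)"
        using nn[of t] by (simp add: ennreal_mult''[symmetric] mult.commute)
      finally show ?thesis .
    qed
  qed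
  finally show ?thesis .
qed



lemma fst_borel2[measurable]: "fst \<in> borel_measurable (borel :: (real \<times> real) measure)"
  using measurable_fst[of "borel::real measure" "borel::real measure"] by (simp add: borel_prod)
lemma snd_borel2[measurable]: "snd \<in> borel_measurable (borel :: (real \<times> real) measure)"
  using measurable_snd[of "borel::real measure" "borel::real measure"] by (simp add: borel_prod)

lemma Wt_borel[measurable]: "Wt \<in> borel_measurable borel"
  unfolding Wt_def by measurable

lemma Wt_nonneg: "0 \<le> Wt t"
proof -
  have "0 \<le> 2 * ln (2 / (1 + sqrt (1 - 4 * exp (-t))))" if "\<not> 1/4 \<le> exp (-t)"
  proof -
    have "sqrt (1 - 4 * exp (-t)) \<le> 1" using that by (simp add: real_sqrt_le_1_iff)
    moreover have "0 \<le> sqrt (1 - 4 * exp (-t))" using that by simp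
    ultimately have "1 \<le> 2 / (1 + sqrt (1 - 4 * exp (-t)))" by (simp add: le_divide_eq_1 add_pos_nonneg)
    then show ?thesis by simp
  qed
  then show ?thesis by (auto simp: Wt_def)
qed

definition gT :: "real \<times> real \<Rightarrow> real" where
  "gT z = indicator T_set z / (fst z * snd z)"

lemma gT_borel[measurable]: "gT \<in> borel_measurable lborel"
  unfolding gT_def by measurable

lemma gT_nonneg: "0 \<le> gT z"
  by (cases z) (auto simp: gT_def T_set_def indicator_def)

lemma distr_T: "distr (density lborel (\<lambda>z. ennreal (gT z))) borel (\<lambda>z. - ln (fst z * snd z))
   = density lborel (\<lambda>t. ennreal (Wt t))"
proof (rule measure_eqI)
  show "sets (distr (density lborel (\<lambda>z. ennreal (gT z))) borel (\<lambda>z. - ln (fst z * snd z))) =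
    sets (density lborel (\<lambda>t. ennreal (Wt t)))" by simp
next
  fix A assume "A \<in> sets (distr (density lborel (\<lambda>z. ennreal (gT z))) borel (\<lambda>z. - ln (fst z * snd z)))"
  then have A[measurable]: "A \<in> sets borel" by simp
  have Lm: "(\<lambda>z::real\<times>real. - ln (fst z * snd z)) \<in> borel_measurable borel" by measurable
  have pre[measurable]: "(\<lambda>z::real\<times>real. - ln (fst z * snd z)) -` A \<in> sets borel"
    using measurable_sets[OF Lm A] by simp
  have "emeasure (distr (density lborel (\<lambda>z. ennreal (gT z))) borel (\<lambda>z. - ln (fst z * snd z))) A
     = emeasure (density lborel (\<lambda>z. ennreal (gT z))) ((\<lambda>z. - ln (fst z * snd z)) -` A)"
    by (subst emeasure_distr) auto
  also have "\<dots> = (\<integral>\<^sup>+z. ennreal (gT z) * indicator ((\<lambda>z. - ln (fst z * snd z)) -` A) z \<partial>lborel)"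
    by (subst emeasure_density) auto
  also have "\<dots> = (\<integral>\<^sup>+z. ennreal (indicator T_set z / (fst z * snd z) * indicator A (- ln (fst z * snd z))) \<partial>lborel)"
    by (intro nn_integral_cong) (auto simp: gT_def indicator_def)
  also have "\<dots> = (\<integral>\<^sup>+t. ennreal (Wt t * indicator A t) \<partial>lborel)"
    by (rule pushA) auto
  also have "\<dots> = emeasure (density lborel (\<lambda>t. ennreal (Wt t))) A"
    by (subst emeasure_density) (auto intro!: nn_integral_cong simp: indicator_def)
  finally show "emeasure (distr (density lborel (\<lambda>z. ennreal (gT z))) borel (\<lambda>z. - ln (fst z * snd z))) A =
         emeasure (density lborel (\<lambda>t. ennreal (Wt t))) A" .
qed

lemma transfer:
  fixes \<Phi> :: "real \<Rightarrow> real"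
  assumes [measurable]: "\<Phi> \<in> borel_measurable borel"
  shows "set_integrable lborel T_set (\<lambda>z. \<Phi> (- ln (fst z * snd z)) / (fst z * snd z))
           \<longleftrightarrow> integrable lborel (\<lambda>t. Wt t * \<Phi> t)" (is ?A)
    and "(LINT z:T_set|lborel. \<Phi> (- ln (fst z * snd z)) / (fst z * snd z)) = (LINT t|lborel. Wt t * \<Phi> t)" (is ?B)
proof -
  have eq: "(\<lambda>z. indicator T_set z *\<^sub>R (\<Phi> (- ln (fst z * snd z)) / (fst z * snd z)))
      = (\<lambda>z. gT z *\<^sub>R \<Phi> (- ln (fst z * snd z)))"
    by (auto simp: gT_def)
  have "set_integrable lborel T_set (\<lambda>z. \<Phi> (- ln (fst z * snd z)) / (fst z * snd z))
     \<longleftrightarrow> integrable (density lborel (\<lambda>z. ennreal (gT z))) (\<lambda>z. \<Phi> (- ln (fst z * snd z)))"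
    unfolding set_integrable_def eq
    by (subst integrable_density) (auto simp: gT_nonneg)
  also have "\<dots> \<longleftrightarrow> integrable (distr (density lborel (\<lambda>z. ennreal (gT z))) borel (\<lambda>z. - ln (fst z * snd z))) \<Phi>"
    by (subst integrable_distr_eq) auto
  also have "\<dots> \<longleftrightarrow> integrable lborel (\<lambda>t. Wt t * \<Phi> t)"
    unfolding distr_T by (subst integrable_density) (auto simp: Wt_nonneg)
  finally show ?A .
  have "(LINT z:T_set|lborel. \<Phi> (- ln (fst z * snd z)) / (fst z * snd z))
      = integral\<^sup>L (density lborel (\<lambda>z. ennreal (gT z))) (\<lambda>z. \<Phi> (- ln (fst z * snd z)))"
    unfolding set_lebesgue_integral_def eq
    by (subst integral_density) (auto simp: gT_nonneg)
  also have "\<dots> = integral\<^sup>L (distr (density lborel (\<lambda>z. ennreal (gT z))) borel (\<lambda>z. - ln (fst z * snd z))) \<Phi>"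
    by (subst integral_distr) auto
  also have "\<dots> = (LINT t|lborel. Wt t * \<Phi> t)"
    unfolding distr_T by (subst integral_density) (auto simp: Wt_nonneg)
  finally show ?B .
qed



lemma nn_to_int:
  fixes f :: "'a \<Rightarrow> real"
  assumes [measurable]: "f \<in> borel_measurable M" and nn: "\<And>x. 0 \<le> f x"
    and eq: "(\<integral>\<^sup>+x. ennreal (f x) \<partial>M) = ennreal r" and r: "0 \<le> r"
  shows "integrable M f" "integral\<^sup>L M f = r"
proof -
  show i: "integrable M f" by (rule integrableI_nonneg) (use nn eq in auto)
  have "ennreal (integral\<^sup>L M f) = ennreal r"
    using nn_integral_eq_integral[OF i] nn eq by simp
  moreover have "0 \<le> integral\<^sup>L M f" using nn by (simp add: integral_nonneg_AE)
  ultimately show "integral\<^sup>L M f = r" using r by simp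
qed

lemma gamma_nn:
  fixes a :: real assumes a: "0 < a"
  shows "(\<integral>\<^sup>+t. ennreal (indicator {0..} t * t^k * exp (- a * t)) \<partial>lborel) = ennreal (fact k / a^(k+1))"
proof -
  define X where "X = (\<integral>\<^sup>+t. ennreal (indicator {0..} t * t^k * exp (- a * t)) \<partial>lborel)"
  have "ennreal (fact k) = (\<integral>\<^sup>+x. ennreal (x^k * exp (-x)) * indicator {0 ..} x \<partial>lborel)"
    using nn_intergal_power_times_exp_Ici[of k] by simp
  also have "\<dots> = ennreal \<bar>a\<bar> * (\<integral>\<^sup>+x. ennreal ((0 + a * x)^k * exp (-(0 + a * x))) * indicator {0 ..} (0 + a * x) \<partial>lborel)"
    by (rule nn_integral_real_affine) (use a in auto)
  also have "\<dots> = ennreal a * (\<integral>\<^sup>+x. ennreal ((0 + a * x)^k * exp (-(0 + a * x))) * indicator {0 ..} (0 + a * x) \<partial>lborel)"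
    using a by simp
  also have "\<dots> = ennreal a * (\<integral>\<^sup>+x. ennreal (a^k) * ennreal (indicator {0..} x * x^k * exp (- a * x)) \<partial>lborel)"
  proof -
    have pw: "ennreal ((0 + a * x)^k * exp (-(0 + a * x))) * indicator {0 ..} (0 + a * x) =
          ennreal (a^k) * ennreal (indicator {0..} x * x^k * exp (- a * x))" for x
      using a by (cases "0 \<le> x") (auto simp: indicator_def ennreal_mult'[symmetric] power_mult_distrib zero_le_mult_iff)
    show ?thesis by (simp only: pw)
  qed
  also have "\<dots> = ennreal a * (ennreal (a^k) * X)"
    by (subst nn_integral_cmult) (auto simp: X_def)
  also have "\<dots> = ennreal (a^(k+1)) * X"
    using a by (simp add: ennreal_mult mult.assoc)
  finally have e: "ennreal (fact k) = ennreal (a^(k+1)) * X" .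
  have inv1: "ennreal (inverse (a^(k+1))) * ennreal (a^(k+1)) = 1"
  proof -
    have "a^(k+1) \<noteq> 0" using a by simp
    then have "inverse (a^(k+1)) * a^(k+1) = 1" by (rule left_inverse)
    then show ?thesis using a by (subst ennreal_mult[symmetric]) auto
  qed
  have "X = ennreal (inverse (a^(k+1))) * (ennreal (a^(k+1)) * X)"
    by (simp only: mult.assoc[symmetric] inv1) simp
  also have "\<dots> = ennreal (inverse (a^(k+1)) * fact k)"
    using a by (simp only: e[symmetric] ennreal_mult'[symmetric] inverse_nonnegative_iff_nonnegative zero_le_power less_imp_le)
  finally show ?thesis by (simp add: X_def field_simps)
qed

lemma ln4_le_2: "ln (4::real) \<le> 2"
proof -
  have "ln (4::real) = 2 * ln 2" using ln_realpow[of 2 2] by simp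
  also have "ln (2::real) \<le> 1" using ln_le_minus_one[of 2] by simp
  finally show ?thesis by simp
qed

lemma Wt_le_t: "Wt t \<le> max t 0"
proof -
  have "2 * ln (2 / (1 + sqrt (1 - 4 * exp (-t)))) \<le> t" if "\<not> 1/4 \<le> exp (-t)"
  proof -
    have "0 \<le> sqrt (1 - 4 * exp (-t))" using that by simp
    then have "2 / (1 + sqrt (1 - 4 * exp (-t))) \<le> 2" by (simp add: divide_le_eq add_pos_nonneg)
    then have "ln (2 / (1 + sqrt (1 - 4 * exp (-t)))) \<le> ln 2"
      using \<open>0 \<le> sqrt _\<close> by (subst ln_le_cancel_iff) (auto simp: add_pos_nonneg)
    moreover have "ln 4 < t"
    proof -
      have "ln (exp (-t)) < ln (1/4)" using that by (subst ln_less_cancel_iff) auto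
      then show ?thesis by (simp add: ln_div)
    qed
    moreover have "ln (4::real) = 2 * ln 2" using ln_realpow[of 2 2] by simp
    ultimately show ?thesis by linarith
  qed
  then show ?thesis by (auto simp: Wt_def)
qed

lemma Wt_le_exp: "Wt t \<le> 8 * exp (-t)"
proof (cases "t \<le> 0")
  case True then show ?thesis by (simp add: Wt_def)
next
  case False
  show ?thesis
  proof (cases "1/4 \<le> exp (-t)")
    case True
    have "t \<le> ln 4"
    proof -
      have "ln (1/4) \<le> ln (exp (-t))" using True by (subst ln_le_cancel_iff) auto
      then show ?thesis by (simp add: ln_div)
    qed
    then show ?thesis using True False ln4_le_2 by (simp add: Wt_def)
  next
    case nq: False
    define s where "s = exp (-t)"
    define q where "q = sqrt (1 - 4 * s)"
    have s0: "0 < s" by (simp add: s_def)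
    have q0: "0 \<le> q" and q1: "q \<le> 1" using nq by (auto simp: q_def s_def)
    have qq: "q^2 = 1 - 4 * s" using nq by (simp add: q_def s_def)
    have "ln (2 / (1 + q)) \<le> 2 / (1 + q) - 1" using q0 by (intro ln_le_minus_one) (auto simp: add_pos_nonneg)
    also have "\<dots> = (1 - q) / (1 + q)" using q0 by (simp add: field_simps)
    also have "\<dots> = 4 * s / (1 + q)^2"
    proof -
      have "(1 - q) * (1 + q) = 4 * s" using qq by (simp add: power2_eq_square algebra_simps)
      moreover have "(1 - q) / (1 + q) = ((1 - q) * (1 + q)) / ((1 + q) * (1 + q))" using q0 by simp
      ultimately show ?thesis by (simp add: power2_eq_square)
    qed
    also have "\<dots> \<le> 4 * s"
    proof -
      have "1 \<le> (1 + q)^2" using q0 by (simp add: power2_eq_square algebra_simps)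
      then show ?thesis using s0 by (simp add: divide_le_eq mult_le_cancel_left1)
    qed
    finally show ?thesis using False nq by (simp add: Wt_def s_def q_def)
  qed
qed

lemma integrable_W_pow: "integrable lborel (\<lambda>t. Wt t * t^n)"
proof -
  have i: "integrable lborel (\<lambda>t::real. (8::real) * (indicator {0..} t * t^n * exp (- 1 * t)))"
    by (intro integrable_mult_right, rule nn_to_int(1)[OF _ _ gamma_nn[of 1 n]]) (auto simp: indicator_def)
  have "AE t in lborel. norm (Wt t * t^n) \<le> norm (8 * (indicator {0..} t * t^n * exp (- 1 * t)))"
  proof (intro AE_I2)
    fix t :: real
    show "norm (Wt t * t^n) \<le> norm (8 * (indicator {0..} t * t^n * exp (- 1 * t)))"
    proof (cases "t \<le> 0")
      case True then show ?thesis by (simp add: Wt_def)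
    next
      case False
      then show ?thesis using Wt_le_exp[of t] Wt_nonneg[of t]
        by (auto simp: abs_mult indicator_def intro!: mult_right_mono)
    qed
  qed
  then show ?thesis by (rule Bochner_Integration.integrable_bound[OF i, rotated]) simp
qed

lemma integrable_W_inv: "integrable lborel (\<lambda>t. Wt t * (1 / t))"
proof -
  have i: "integrable lborel (\<lambda>t::real. (8::real) * (indicator {0..} t * t^0 * exp (- 1 * t)))"
    by (intro integrable_mult_right, rule nn_to_int(1)[OF _ _ gamma_nn[of 1 0]]) (auto simp: indicator_def)
  have "AE t in lborel. norm (Wt t * (1 / t)) \<le> norm (8 * (indicator {0..} t * t^0 * exp (- 1 * t)))"
  proof (intro AE_I2)
    fix t :: real
    show "norm (Wt t * (1 / t)) \<le> norm (8 * (indicator {0..} t * t^0 * exp (- 1 * t)))"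
    proof (cases "t \<le> 0")
      case True then show ?thesis by (simp add: Wt_def)
    next
      case False
      show ?thesis
      proof (cases "t \<le> 1")
        case True
        have "Wt t / t \<le> 1" using Wt_le_t[of t] False by (simp add: divide_le_eq)
        moreover have "1 \<le> 8 * exp (-t)"
        proof -
          have "1 - t \<le> exp (-t)" using exp_ge_add_one_self[of "-t"] by simp
          then have "exp (-1) \<le> exp (-t)" using True by simp
          moreover have "1 / 8 \<le> exp (- 1::real)"
          proof -
            have "exp (1::real) \<le> 8" using exp_le by simp
            then show ?thesis by (simp add: exp_minus field_simps)
          qed
          ultimately show ?thesis by linarith
        qed
        ultimately have "Wt t / t \<le> 8 * exp (-t)" by linarith
        then show ?thesis using False Wt_nonneg[of t] by (simp add: abs_mult indicator_def)
      next
        case f2: False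
        have "Wt t / t \<le> Wt t" using f2 Wt_nonneg[of t] by (simp add: divide_le_eq mult_le_cancel_left1)
        then show ?thesis using Wt_le_exp[of t] Wt_nonneg[of t] False
          by (simp add: abs_mult indicator_def)
      qed
    qed
  qed
  then show ?thesis by (rule Bochner_Integration.integrable_bound[OF i, rotated]) simp
qed



definition lam :: "real \<Rightarrow> real" where
  "lam v = (if 0 < v \<and> v < 1 then 1 / (- ln v) else 0)"

definition Lv :: "real \<Rightarrow> real" where
  "Lv c = (LINT v|lborel. indicator {0<..<c} v * lam v)"

lemma lam_borel[measurable]: "lam \<in> borel_measurable borel"
  unfolding lam_def by measurable

lemma lam_nonneg: "0 \<le> lam v"
  by (auto simp: lam_def ln_less_zero less_imp_le)

lemma Lv_borel[measurable]: "Lv \<in> borel_measurable borel"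
proof -
  have "(\<lambda>(c, v). indicator {0<..<c} v * lam v :: real) \<in> borel_measurable (borel \<Otimes>\<^sub>M lborel)"
  proof -
    have "(\<lambda>(c, v). indicator {0<..<c} v * lam v :: real) = (\<lambda>z. (if 0 < snd z \<and> snd z < fst z then 1 else 0) * lam (snd z))"
      by (auto simp: indicator_def fun_eq_iff)
    also have "\<dots> \<in> borel_measurable (borel \<Otimes>\<^sub>M lborel)" by measurable
    finally show ?thesis .
  qed
  then have "(\<lambda>c. LINT v|lborel. indicator {0<..<c} v * lam v) \<in> borel_measurable borel"
    by (rule lborel.borel_measurable_lebesgue_integral)
  then show ?thesis unfolding Lv_def .
qed

lemma Lv_int:
  assumes c: "0 < c" "c < 1"
  shows "integrable lborel (\<lambda>v. indicator {0<..<c} v * lam v)"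
proof -
  have "integrable lborel (\<lambda>v. indicator {0<..<c} v *\<^sub>R lam v)"
  proof (rule integrableI_bounded_set_indicator[where B = "1 / (- ln c)"])
    show "emeasure lborel {0<..<c} < \<infinity>" using c by simp
    show "AE x in lborel. x \<in> {0<..<c} \<longrightarrow> norm (lam x) \<le> 1 / (- ln c)"
    proof (intro AE_I2 impI)
      fix x assume x: "x \<in> {0<..<c}"
      then have "ln x \<le> ln c" using c by simp
      moreover have "ln c < 0" using c by simp
      ultimately have "1 / (- ln x) \<le> 1 / (- ln c)" by (intro divide_left_mono) (auto intro: mult_neg_neg)
      then show "norm (lam x) \<le> 1 / (- ln c)" using x c lam_nonneg[of x] by (auto simp: lam_def)
    qed
  qed auto
  then show ?thesis by simp
qed

lemma Lv_nn:
  assumes c: "0 < c" "c < 1"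
  shows "(\<integral>\<^sup>+v. ennreal (indicator {0<..<c} v * lam v) \<partial>lborel) = ennreal (Lv c)"
  unfolding Lv_def
  by (rule nn_integral_eq_integral[OF Lv_int[OF c]]) (auto simp: lam_nonneg)

lemma Lv_nonneg: "0 \<le> Lv c"
  unfolding Lv_def by (rule integral_nonneg_AE) (auto simp: lam_nonneg)

lemma li_Lv:
  assumes c: "0 < c" "c < 1"
  shows "li c = - Lv c"
proof -
  have "li c = (LINT v|lborel. indicator {0<..<c} v *\<^sub>R (1 / ln v))"
    using c by (simp add: li_def interval_lebesgue_integral_def set_lebesgue_integral_def zero_ereal_def)
  also have "\<dots> = (LINT v|lborel. - (indicator {0<..<c} v * lam v))"
    using c by (intro Bochner_Integration.integral_cong) (auto simp: indicator_def lam_def)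
  also have "\<dots> = - Lv c" by (simp add: Lv_def)
  finally show ?thesis .
qed



definition hl :: "real \<Rightarrow> real" where
  "hl t = (if 0 < t then exp (- t) / t else 0)"

lemma hl_borel[measurable]: "hl \<in> borel_measurable borel"
  unfolding hl_def by measurable

lemma hl_nonneg: "0 \<le> hl t" by (simp add: hl_def)

lemma split_Lv:
  assumes a: "0 < a" "a \<le> x" "x < 1"
  shows "(\<integral>\<^sup>+v. ennreal (indicator {a..x} v * lam v) \<partial>lborel) = ennreal (Lv x - Lv a)"
proof -
  define J where "J = (\<integral>\<^sup>+v. ennreal (indicator {a..x} v * lam v) \<partial>lborel)"
  have "AE v in lborel. ennreal (indicator {0<..<a} v * lam v) + ennreal (indicator {a..x} v * lam v)
        = ennreal (indicator {0<..<x} v * lam v)"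
    using AE_lborel_singleton[of x] by eventually_elim (use a in \<open>auto simp: indicator_def\<close>)
  then have "(\<integral>\<^sup>+v. ennreal (indicator {0<..<a} v * lam v) + ennreal (indicator {a..x} v * lam v) \<partial>lborel)
     = (\<integral>\<^sup>+v. ennreal (indicator {0<..<x} v * lam v) \<partial>lborel)"
    by (rule nn_integral_cong_AE)
  then have "ennreal (Lv a) + J = ennreal (Lv x)"
    using a by (subst (asm) nn_integral_add) (auto simp: Lv_nn J_def)
  then have "J = ennreal (Lv x) - ennreal (Lv a)"
    by (metis ennreal_add_diff_cancel_left ennreal_neq_top)
  also have "\<dots> = ennreal (Lv x - Lv a)" by (simp add: ennreal_minus Lv_nonneg)
  finally show ?thesis unfolding J_def .
qed

lemma Lv_mono: assumes "0 < a" "a \<le> x" "x < 1" shows "Lv a \<le> Lv x"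
  unfolding Lv_def
  by (rule integral_mono[OF Lv_int Lv_int]) (use assms lam_nonneg in \<open>auto simp: indicator_def\<close>)

lemma inner_li:
  assumes x: "0 < x" "x < 1"
  shows "(\<integral>\<^sup>+y. ennreal (indicator T_set (x, y) / (x * y) * hl (- ln (x * y))) \<partial>lborel)
       = ennreal ((Lv x - Lv (x * (1 - x))) / x)"
proof -
  define f where "f v = ennreal (indicator {x * (1 - x)..x} v * lam v)" for v
  have [measurable]: "f \<in> borel_measurable borel" unfolding f_def by measurable
  have "(\<integral>\<^sup>+y. ennreal (indicator T_set (x, y) / (x * y) * hl (- ln (x * y))) \<partial>lborel)
      = (\<integral>\<^sup>+y. f (0 + x * y) \<partial>lborel)"
  proof (rule nn_integral_cong)
    fix y :: real
    show "ennreal (indicator T_set (x, y) / (x * y) * hl (- ln (x * y))) = f (0 + x * y)"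
    proof (cases "1 - x \<le> y \<and> y \<le> 1")
      case True
      then have y0: "0 < y" using x by auto
      have xy0: "0 < x * y" using x y0 by simp
      have "x * y \<le> x" using True x by (simp add: mult_left_le)
      then have xy: "0 < x * y" "x * y < 1" using xy0 x by linarith+
      have "x * (1 - x) \<le> x * y" using True x by (intro mult_left_mono) auto
      moreover have "x * y \<le> x" by fact
      moreover have "- ln (x * y) > 0" using xy by simp
      ultimately show ?thesis using True x y0 xy
        by (auto simp: f_def indicator_def T_set_def hl_def lam_def)
    next
      case False
      then have "\<not> (x * (1 - x) \<le> x * y \<and> x * y \<le> x)" using x by auto
      then show ?thesis using False by (auto simp: f_def indicator_def T_set_def)
    qed
  qed
  also have "\<dots> = ennreal (1 / x) * (ennreal x * (\<integral>\<^sup>+y. f (0 + x * y) \<partial>lborel))"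
  proof -
    have "ennreal (1 / x) * ennreal x = 1" using x by (simp add: ennreal_mult[symmetric])
    then show ?thesis by (simp add: mult.assoc[symmetric])
  qed
  also have "ennreal x * (\<integral>\<^sup>+y. f (0 + x * y) \<partial>lborel) = (\<integral>\<^sup>+v. f v \<partial>lborel)"
    using nn_integral_real_affine[of f x 0] x by simp
  also have "\<dots> = ennreal (Lv x - Lv (x * (1 - x)))"
    unfolding f_def using x by (intro split_Lv) (auto simp: mult_pos_pos mult_left_le)
  also have "ennreal (1 / x) * \<dots> = ennreal ((Lv x - Lv (x * (1 - x))) / x)"
    using x by (subst ennreal_mult'[symmetric]) (auto simp: mult.commute)
  finally show ?thesis .
qed



lemma Z_eq:
  "(\<integral>\<^sup>+z. ennreal (indicator T_set z / (fst z * snd z) * hl (- ln (fst z * snd z))) \<partial>lborel)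
   = (\<integral>\<^sup>+x. ennreal (indicator {0<..<1} x * ((Lv x - Lv (x * (1 - x))) / x)) \<partial>lborel)"
proof -
  have "(\<integral>\<^sup>+z. ennreal (indicator T_set z / (fst z * snd z) * hl (- ln (fst z * snd z))) \<partial>lborel)
      = (\<integral>\<^sup>+z. ennreal (indicator T_set z / (fst z * snd z) * hl (- ln (fst z * snd z))) \<partial>(lborel \<Otimes>\<^sub>M lborel))"
    by (simp only: lborel_prod)
  also have "\<dots> = (\<integral>\<^sup>+x. \<integral>\<^sup>+y. ennreal (indicator T_set (x, y) / (x * y) * hl (- ln (x * y))) \<partial>lborel \<partial>lborel)"
    by (subst lborel.nn_integral_fst[symmetric]) (auto simp: lborel_prod[symmetric])
  also have "\<dots> = (\<integral>\<^sup>+x. ennreal (indicator {0<..<1} x * ((Lv x - Lv (x * (1 - x))) / x)) \<partial>lborel)"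
  proof (rule nn_integral_cong_AE)
    show "AE x in lborel. (\<integral>\<^sup>+y. ennreal (indicator T_set (x, y) / (x * y) * hl (- ln (x * y))) \<partial>lborel)
        = ennreal (indicator {0<..<1} x * ((Lv x - Lv (x * (1 - x))) / x))"
      using AE_lborel_singleton[of 1]
    proof eventually_elim
      case (elim x)
      show ?case
      proof (cases "0 < x \<and> x < 1")
        case True
        then show ?thesis using inner_li[of x] by (simp add: indicator_def)
      next
        case False
        then have "x \<le> 0 \<or> 1 < x" using elim by auto
        then have "ennreal (indicator T_set (x, y) / (x * y) * hl (- ln (x * y))) = 0" for y
          by (cases "x = 0") (auto simp: T_set_def indicator_def)
        then show ?thesis using False by (auto simp: indicator_def)
      qed
    qed
  qed
  finally show ?thesis .
qed

lemma Q_nn: "(\<integral>\<^sup>+x. ennreal (indicator {0<..<1} x * (Lv x / x)) \<partial>lborel) = 1"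
proof -
  define K where "K x v = ennreal (if 0 < x \<and> x < 1 \<and> 0 < v \<and> v < x then lam v / x else 0)" for x v :: real
  have Km[measurable]: "case_prod K \<in> borel_measurable (lborel \<Otimes>\<^sub>M lborel)"
    unfolding K_def by measurable
  have "(\<integral>\<^sup>+x. ennreal (indicator {0<..<1} x * (Lv x / x)) \<partial>lborel) = (\<integral>\<^sup>+x. \<integral>\<^sup>+v. K x v \<partial>lborel \<partial>lborel)"
  proof (rule nn_integral_cong)
    fix x :: real
    show "ennreal (indicator {0<..<1} x * (Lv x / x)) = (\<integral>\<^sup>+v. K x v \<partial>lborel)"
    proof (cases "0 < x \<and> x < 1")
      case True
      have "(\<integral>\<^sup>+v. K x v \<partial>lborel) = (\<integral>\<^sup>+v. ennreal (1 / x) * ennreal (indicator {0<..<x} v * lam v) \<partial>lborel)"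
        using True by (intro nn_integral_cong) (auto simp: K_def indicator_def ennreal_mult'[symmetric] lam_nonneg)
      also have "\<dots> = ennreal (1 / x) * ennreal (Lv x)"
        using True by (subst nn_integral_cmult) (auto simp: Lv_nn)
      also have "\<dots> = ennreal (indicator {0<..<1} x * (Lv x / x))"
        using True by (subst ennreal_mult'[symmetric]) auto
      finally show ?thesis ..
    next
      case False
      then show ?thesis by (auto simp: K_def indicator_def)
    qed
  qed
  also have "\<dots> = (\<integral>\<^sup>+v. \<integral>\<^sup>+x. K x v \<partial>lborel \<partial>lborel)"
    by (rule lborel_pair.Fubini'[symmetric]) (use Km in simp)
  also have "\<dots> = (\<integral>\<^sup>+v. ennreal (indicator {0<..<1::real} v) \<partial>lborel)"
  proof (rule nn_integral_cong)
    fix v :: real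
    show "(\<integral>\<^sup>+x. K x v \<partial>lborel) = ennreal (indicator {0<..<1} v)"
    proof (cases "0 < v \<and> v < 1")
      case True
      have "AE x in lborel. K x v = ennreal (lam v) * ennreal (indicator {v..1} x / x)"
        using AE_lborel_singleton[of 1] AE_lborel_singleton[of v]
        by eventually_elim (use True in \<open>auto simp: K_def indicator_def ennreal_mult'[symmetric] lam_nonneg\<close>)
      then have "(\<integral>\<^sup>+x. K x v \<partial>lborel) = (\<integral>\<^sup>+x. ennreal (lam v) * ennreal (indicator {v..1} x / x) \<partial>lborel)"
        by (rule nn_integral_cong_AE)
      also have "\<dots> = ennreal (lam v) * ennreal (ln 1 - ln v)"
        using True by (subst nn_integral_cmult) (auto simp: nn_inv_Icc)
      also have "\<dots> = 1"
      proof -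
        have "ln v < 0" using True by simp
        then have "lam v * (ln 1 - ln v) = 1" using True by (simp add: lam_def)
        then show ?thesis by (subst ennreal_mult'[symmetric]) (auto simp: lam_nonneg)
      qed
      finally show ?thesis using True by simp
    next
      case False
      then have "K x v = 0" for x by (auto simp: K_def)
      then show ?thesis using False by (simp add: indicator_def)
    qed
  qed
  also have "\<dots> = 1" by (simp add: ennreal_indicator)
  finally show ?thesis .
qed



lemma LI:
  shows "interval_lebesgue_integrable lborel 0 1 (\<lambda>x. li (x - x\<^sup>2) / x)"
    and "integrable lborel (\<lambda>t. Wt t * hl t)"
    and "(LINT t|lborel. Wt t * hl t) = 1 + (LBINT x=0..1. li (x - x\<^sup>2) / x)"
proof -
  define Q where "Q x = indicator {0<..<1} x * (Lv x / x)" for x :: real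
  define P where "P x = indicator {0<..<1} x * (Lv (x * (1 - x)) / x)" for x :: real
  have Qm[measurable]: "Q \<in> borel_measurable borel" unfolding Q_def by measurable
  have Pm[measurable]: "P \<in> borel_measurable borel" unfolding P_def by measurable
  have Qnn: "0 \<le> Q x" for x by (auto simp: Q_def indicator_def Lv_nonneg)
  have Pnn: "0 \<le> P x" for x by (auto simp: P_def indicator_def Lv_nonneg)
  have PQ: "P x \<le> Q x" for x
  proof (cases "0 < x \<and> x < 1")
    case True
    then have "Lv (x * (1 - x)) \<le> Lv x" by (intro Lv_mono) (auto simp: mult_left_le)
    then show ?thesis using True by (simp add: P_def Q_def divide_right_mono)
  next
    case False then show ?thesis by (simp add: P_def Q_def)
  qed
  have Qn1: "(\<integral>\<^sup>+x. ennreal (Q x) \<partial>lborel) = ennreal 1" using Q_nn by (simp add: Q_def)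
  have Qi: "integrable lborel Q" by (rule nn_to_int(1)[OF _ Qnn Qn1]) auto
  have QI: "integral\<^sup>L lborel Q = 1" by (rule nn_to_int(2)[OF _ Qnn Qn1]) auto
  have Pi: "integrable lborel P"
    by (rule Bochner_Integration.integrable_bound[OF Qi]) (use Pnn PQ in \<open>auto intro!: AE_I2 simp: abs_of_nonneg Qnn\<close>)
  have PI: "integral\<^sup>L lborel P \<le> 1"
    using integral_mono[OF Pi Qi PQ] QI by simp
  define Z where "Z = (\<integral>\<^sup>+z. ennreal (indicator T_set z / (fst z * snd z) * hl (- ln (fst z * snd z))) \<partial>lborel)"
  have Z1: "Z = (\<integral>\<^sup>+x. ennreal (Q x - P x) \<partial>lborel)"
    unfolding Z_def Z_eq by (intro nn_integral_cong) (simp add: Q_def P_def diff_divide_distrib right_diff_distrib)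
  have "ennreal 1 = (\<integral>\<^sup>+x. ennreal (Q x) \<partial>lborel)" using Q_nn by (simp add: Q_def)
  also have "\<dots> = (\<integral>\<^sup>+x. ennreal (P x) + ennreal (Q x - P x) \<partial>lborel)"
    using PQ Pnn by (intro nn_integral_cong) (simp add: ennreal_plus[symmetric])
  also have "\<dots> = (\<integral>\<^sup>+x. ennreal (P x) \<partial>lborel) + Z"
    unfolding Z1 by (rule nn_integral_add) auto
  also have "(\<integral>\<^sup>+x. ennreal (P x) \<partial>lborel) = ennreal (integral\<^sup>L lborel P)"
    by (rule nn_integral_eq_integral[OF Pi]) (use Pnn in auto)
  finally have "ennreal 1 = ennreal (integral\<^sup>L lborel P) + Z" .
  then have "Z = ennreal 1 - ennreal (integral\<^sup>L lborel P)"
    by (metis ennreal_add_diff_cancel_left ennreal_neq_top)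
  also have "\<dots> = ennreal (1 - integral\<^sup>L lborel P)"
    by (rule ennreal_minus) (simp add: integral_nonneg_AE Pnn)
  finally have Zeq: "Z = ennreal (1 - integral\<^sup>L lborel P)" .
  have W: "(\<integral>\<^sup>+t. ennreal (Wt t * hl t) \<partial>lborel) = ennreal (1 - integral\<^sup>L lborel P)"
    using pushA[of hl] Zeq unfolding Z_def by (simp add: hl_nonneg)
  have Wnn: "0 \<le> Wt t * hl t" for t by (simp add: Wt_nonneg hl_nonneg)
  show "integrable lborel (\<lambda>t. Wt t * hl t)"
    by (rule nn_to_int(1)[OF _ Wnn W]) (use PI in auto)
  have WI: "(LINT t|lborel. Wt t * hl t) = 1 - integral\<^sup>L lborel P"
    by (rule nn_to_int(2)[OF _ Wnn W]) (use PI in auto)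
  have eqP: "indicator {0<..<1} x *\<^sub>R (li (x - x\<^sup>2) / x) = - P x" for x :: real
  proof (cases "0 < x \<and> x < 1")
    case True
    have "x - x\<^sup>2 = x * (1 - x)" by (simp add: power2_eq_square algebra_simps)
    moreover have "0 < x * (1 - x)" "x * (1 - x) < 1" using True
      by (auto simp: mult_left_le) (smt (verit) mult_left_le)
    ultimately show ?thesis using True by (simp add: li_Lv P_def)
  next
    case False then show ?thesis by (simp add: P_def)
  qed
  have ei: "einterval 0 1 = {0<..<1::real}" by (simp add: zero_ereal_def one_ereal_def)
  have e2: "(\<lambda>x. indicator {0<..<1} x *\<^sub>R (li (x - x\<^sup>2) / x)) = (\<lambda>x. - P x)"
    by (rule ext, rule eqP)
  show "interval_lebesgue_integrable lborel 0 1 (\<lambda>x. li (x - x\<^sup>2) / x)"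
    unfolding interval_lebesgue_integrable_def set_integrable_def ei e2
    using Pi by simp
  have "(LBINT x=0..1. li (x - x\<^sup>2) / x) = - integral\<^sup>L lborel P"
    unfolding interval_lebesgue_integral_def set_lebesgue_integral_def ei e2
    by simp
  then show "(LINT t|lborel. Wt t * hl t) = 1 + (LBINT x=0..1. li (x - x\<^sup>2) / x)"
    using WI by simp
qed



definition mm :: "real \<Rightarrow> real" where
  "mm t = (if 0 < t then 2 * (exp (- t) - exp (- 2 * t)) / t else 0)"

definition rho :: "real \<Rightarrow> real" where
  "rho t = Wt t / t - mm t"

lemma mm_borel[measurable]: "mm \<in> borel_measurable borel" unfolding mm_def by measurable
lemma rho_borel[measurable]: "rho \<in> borel_measurable borel" unfolding rho_def by measurable

lemma mm_bounds: "0 \<le> mm t" "mm t \<le> 2"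
proof -
  have "0 \<le> mm t \<and> mm t \<le> 2"
  proof (cases "0 < t")
    case True
    have e: "exp (- 2 * t) = exp (-t) * exp (-t)" by (simp add: exp_add[symmetric])
    have a: "exp (- t) \<le> 1" using True by simp
    have b: "1 - t \<le> exp (- t)" using exp_ge_add_one_self[of "-t"] by simp
    have "0 \<le> exp (- t) - exp (- 2 * t)" using a unfolding e by (simp add: mult_left_le)
    moreover have "exp (- t) - exp (- 2 * t) \<le> t"
    proof -
      have "exp (- t) - exp (- 2 * t) = exp (-t) * (1 - exp (-t))" unfolding e by (simp add: algebra_simps)
      also have "\<dots> \<le> 1 * (1 - exp (-t))" using a by (intro mult_right_mono) auto
      finally show ?thesis using b by simp
    qed
    ultimately show ?thesis using True by (simp add: mm_def divide_le_eq)
  qed (simp add: mm_def)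
  then show "0 \<le> mm t" "mm t \<le> 2" by auto
qed

lemma psi_bounds: "0 \<le> Wt t / t" "Wt t / t \<le> 1"
proof -
  show "0 \<le> Wt t / t" using Wt_nonneg[of t] by (cases "t \<le> 0") (auto simp: Wt_def)
  show "Wt t / t \<le> 1" using Wt_le_t[of t] Wt_nonneg[of t] by (cases "t \<le> 0") (auto simp: Wt_def divide_le_eq)
qed


lemma W_asymp:
  assumes t: "0 < t" and nq: "\<not> 1/4 \<le> exp (-t)"
  shows "\<bar>Wt t - 2 * exp (-t)\<bar> \<le> 24 * exp (-t)^2"
proof -
  define s where "s = exp (-t)"
  define q where "q = sqrt (1 - 4 * s)"
  have s0: "0 < s" by (simp add: s_def)
  have s4: "s < 1/4" using nq by (simp add: s_def)
  have q0: "0 \<le> q" and q1: "q \<le> 1" using nq by (auto simp: q_def s_def)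
  have qq: "q^2 = 1 - 4 * s" using nq by (simp add: q_def s_def)
  define u where "u = (1 - q) / 2"
  have pq: "(1 - q) * (1 + q) = 4 * s" using qq by (simp add: power2_eq_square algebra_simps)
  have u': "u = 2 * s / (1 + q)"
  proof -
    have "1 + q \<noteq> 0" using q0 by simp
    then have "u = (1 - q) * (1 + q) / (2 * (1 + q))" unfolding u_def by (simp add: field_simps)
    also have "\<dots> = 2 * s / (1 + q)" unfolding pq using \<open>1 + q \<noteq> 0\<close> by (simp add: field_simps)
    finally show ?thesis .
  qed
  have us: "s \<le> u"
  proof -
    have "s * (1 + q) \<le> 2 * s" using q1 s0 by (simp add: algebra_simps)
    then show ?thesis unfolding u' using q0 by (simp add: pos_le_divide_eq)
  qed
  have u2: "u \<le> 2 * s" unfolding u' using q0 s0 by (simp add: divide_le_eq mult_le_cancel_left1)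
  have uh: "u \<le> 1/2" using u2 s4 by simp
  have W: "Wt t = - 2 * ln (1 - u)"
  proof -
    have e1: "1 - u = (1 + q) / 2" by (simp add: u_def field_simps)
    have "ln (1 - u) = ln (1 + q) - ln 2" unfolding e1 using q0 by (simp add: ln_div)
    also have "\<dots> = - ln (2 / (1 + q))" using q0 by (simp add: ln_div)
    finally have "ln (1 - u) = - ln (2 / (1 + q))" .
    then show ?thesis using t nq by (simp add: Wt_def s_def[symmetric] q_def[symmetric])
  qed
  have l1: "u \<le> - ln (1 - u)" using ln_le_minus_one[of "1 - u"] uh by simp
  have l2: "- ln (1 - u) \<le> u / (1 - u)"
  proof -
    have "ln (1 / (1 - u)) \<le> 1 / (1 - u) - 1" using uh by (intro ln_le_minus_one) auto
    moreover have "ln (1 / (1 - u)) = - ln (1 - u)" using uh by (simp add: ln_div)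
    moreover have "1 / (1 - u) - 1 = u / (1 - u)" using uh by (simp add: field_simps)
    ultimately show ?thesis by simp
  qed
  have l3: "u / (1 - u) - u \<le> 2 * u^2"
  proof -
    have "u / (1 - u) - u = u^2 / (1 - u)" using uh by (simp add: field_simps power2_eq_square)
    also have "\<dots> \<le> u^2 / (1/2)" using uh by (intro divide_left_mono) auto
    finally show ?thesis by simp
  qed
  have l4: "u - s \<le> 4 * s^2"
  proof -
    have "u - s = s * (1 - q) / (1 + q)" unfolding u' using q0 by (simp add: field_simps)
    also have "\<dots> \<le> s * (1 - q)"
    proof -
      have c0: "0 \<le> s * (1 - q) * q" using q0 q1 s0 by simp
      have "s * (1 - q) \<le> s * (1 - q) * (1 + q)" using c0 by (simp add: algebra_simps)
      then show ?thesis using q0 by (simp add: pos_divide_le_eq add_pos_nonneg)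
    qed
    also have "1 - q = 2 * u" by (simp add: u_def)
    finally have "u - s \<le> s * (2 * u)" using s0 by simp
    also have "\<dots> \<le> s * (2 * (2 * s))" using u2 s0 by (intro mult_left_mono) auto
    finally show ?thesis by (simp add: power2_eq_square)
  qed
  have "u^2 \<le> (2 * s)^2" using u2 us s0 by (intro power_mono) auto
  then have h2: "2 * u^2 \<le> 8 * s^2" by (simp add: power2_eq_square)
  have h0: "Wt t - 2 * s = 2 * (- ln (1 - u) - u) + 2 * (u - s)" using W by simp
  have h1: "- ln (1 - u) - u \<le> 2 * u^2" using l2 l3 by linarith
  have a1: "0 \<le> Wt t - 2 * s" using h0 l1 us by (smt (verit))
  have a2: "Wt t - 2 * s \<le> 24 * s^2" using h0 h1 h2 l4 by (smt (verit))
  from a1 a2 have "\<bar>Wt t - 2 * s\<bar> \<le> 24 * s^2" by simp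
  then show ?thesis by (simp add: s_def)
qed


lemma ln4_ge_1: "1 \<le> ln (4::real)"
proof -
  have "exp 1 \<le> (4::real)" using exp_le by simp
  then have "ln (exp 1) \<le> ln (4::real)" by (subst ln_le_cancel_iff) auto
  then show ?thesis by simp
qed

lemma rho_bound: "\<bar>rho t\<bar> \<le> 48 * exp (- 2 * t)"
proof (cases "0 < t")
  case False
  then show ?thesis by (simp add: rho_def mm_def Wt_def)
next
  case True
  have e: "exp (- 2 * t) = exp (-t)^2" by (simp add: exp_add[symmetric] power2_eq_square)
  show ?thesis
  proof (cases "1/4 \<le> exp (-t)")
    case True
    have "\<bar>rho t\<bar> \<le> 3" using psi_bounds[of t] mm_bounds[of t] by (simp add: rho_def)
    moreover have "(1/4)^2 \<le> exp (-t)^2" using True by (intro power_mono) auto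
    ultimately show ?thesis unfolding e by (simp add: power2_eq_square)
  next
    case nq: False
    have t4: "1 \<le> t"
    proof -
      have "ln (exp (-t)) < ln (1/4)" using nq by (subst ln_less_cancel_iff) auto
      then show ?thesis using ln4_ge_1 by (simp add: ln_div)
    qed
    have "rho t = (Wt t - 2 * exp (-t) + 2 * exp (- 2 * t)) / t"
      using True by (simp add: rho_def mm_def diff_divide_distrib add_divide_distrib)
    also have "\<bar>\<dots>\<bar> \<le> \<bar>Wt t - 2 * exp (-t) + 2 * exp (- 2 * t)\<bar>"
    proof -
      have "\<bar>(Wt t - 2 * exp (-t) + 2 * exp (- 2 * t)) / t\<bar> = \<bar>Wt t - 2 * exp (-t) + 2 * exp (- 2 * t)\<bar> / t"
        using t4 by (simp add: abs_div)
      also have "\<dots> \<le> \<bar>Wt t - 2 * exp (-t) + 2 * exp (- 2 * t)\<bar> / 1"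
        using t4 by (intro divide_left_mono) auto
      finally show ?thesis by simp
    qed
    also have "\<dots> \<le> 24 * exp (-t)^2 + 2 * exp (-t)^2"
      using W_asymp[OF True nq] unfolding e by simp
    finally show ?thesis unfolding e by simp
  qed
qed



definition U :: "nat \<Rightarrow> real \<Rightarrow> real" where
  "U N t = (\<Sum>k<N. (- t)^k / fact k)"

lemma U_borel[measurable]: "U N \<in> borel_measurable borel"
  unfolding U_def by measurable

lemma U_bound: "\<bar>U N t\<bar> \<le> exp \<bar>t\<bar>"
proof -
  have "\<bar>U N t\<bar> \<le> (\<Sum>k<N. \<bar>t\<bar>^k / fact k)"
    unfolding U_def by (rule order.trans[OF sum_abs]) (simp add: abs_mult power_abs)
  also have "\<dots> \<le> (\<Sum>k. \<bar>t\<bar>^k / fact k)"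
    using exp_converges[of "\<bar>t\<bar>"] by (intro sum_le_suminf) (auto simp: sums_iff divide_inverse mult.commute)
  also have "\<dots> = exp \<bar>t\<bar>"
    using exp_converges[of "\<bar>t\<bar>"] by (simp add: sums_iff divide_inverse mult.commute)
  finally show ?thesis .
qed

lemma U_lim: "(\<lambda>N. U N t) \<longlonglongrightarrow> exp (- t)"
  using exp_converges[of "- t"] unfolding sums_def U_def by (simp add: divide_inverse mult.commute)

lemma rho_zero: "t \<le> 0 \<Longrightarrow> rho t = 0"
  by (simp add: rho_def mm_def Wt_def)

lemma exp_int: "integrable lborel (\<lambda>t::real. c * (indicator {0..} t * t^0 * exp (- 1 * t)))"
  by (intro integrable_mult_right, rule nn_to_int(1)[OF _ _ gamma_nn[of 1 0]]) (auto simp: indicator_def)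

lemma rho_dom: "\<bar>rho t * (U N t - exp (- t))\<bar> \<le> 96 * (indicator {0..} t * t^0 * exp (- 1 * t))"
proof (cases "0 < t")
  case False then show ?thesis by (simp add: rho_zero indicator_def)
next
  case True
  have "\<bar>U N t - exp (- t)\<bar> \<le> exp t + exp t"
  proof -
    have "\<bar>U N t\<bar> \<le> exp t" using U_bound[of N t] True by simp
    moreover have "exp (- t) \<le> exp t" using True by simp
    moreover have "\<bar>U N t - exp (- t)\<bar> \<le> \<bar>U N t\<bar> + \<bar>exp (- t)\<bar>" by (rule abs_triangle_ineq4)
    moreover have "\<bar>exp (- t)\<bar> = exp (- t)" by simp
    ultimately show ?thesis by linarith
  qed
  then have "\<bar>rho t\<bar> * \<bar>U N t - exp (- t)\<bar> \<le> 48 * exp (- 2 * t) * (2 * exp t)"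
    using rho_bound[of t] by (intro mult_mono) auto
  then have "\<bar>rho t * (U N t - exp (- t))\<bar> \<le> 48 * exp (- 2 * t) * (2 * exp t)"
    by (simp add: abs_mult)
  also have "48 * exp (- 2 * t) * (2 * exp t) = 96 * exp (- t)"
    by (simp add: mult_exp_exp[symmetric] exp_add[symmetric])
  finally show ?thesis using True by (simp add: indicator_def)
qed

lemma rho_conv:
  shows "\<And>N. integrable lborel (\<lambda>t. rho t * (U N t - exp (- t)))"
    and "(\<lambda>N. LINT t|lborel. rho t * (U N t - exp (- t))) \<longlonglongrightarrow> 0"
proof -
  have *: "AE t in lborel. (\<lambda>N. rho t * (U N t - exp (- t))) \<longlonglongrightarrow> 0"
  proof (intro AE_I2)
    fix t :: real
    have "(\<lambda>N. rho t * (U N t - exp (- t))) \<longlonglongrightarrow> rho t * (exp (-t) - exp (- t))"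
      by (intro tendsto_intros U_lim)
    then show "(\<lambda>N. rho t * (U N t - exp (- t))) \<longlonglongrightarrow> 0" by simp
  qed
  have b: "AE t in lborel. norm (rho t * (U N t - exp (- t))) \<le> 96 * (indicator {0..} t * t^0 * exp (- 1 * t))" for N
    using rho_dom[of t N for t] by (intro AE_I2) simp
  show "\<And>N. integrable lborel (\<lambda>t. rho t * (U N t - exp (- t)))"
    by (rule integrable_dominated_convergence2[OF _ _ exp_int * b]) auto
  have "(\<lambda>N. integral\<^sup>L lborel (\<lambda>t. rho t * (U N t - exp (- t)))) \<longlonglongrightarrow> integral\<^sup>L lborel (\<lambda>t::real. 0::real)"
    by (rule integral_dominated_convergence[where w = "\<lambda>t. 96 * (indicator {0..} t * t^0 * exp (- 1 * t))"])
       (use * b exp_int in auto)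
  then show "(\<lambda>N. LINT t|lborel. rho t * (U N t - exp (- t))) \<longlonglongrightarrow> 0" by simp
qed



lemma nn_eq_int:
  fixes f g :: "real \<Rightarrow> real"
  assumes [measurable]: "f \<in> borel_measurable borel" and fn: "\<And>x. 0 \<le> f x" and gn: "\<And>x. 0 \<le> g x"
    and eq: "(\<integral>\<^sup>+x. ennreal (f x) \<partial>lborel) = (\<integral>\<^sup>+x. ennreal (g x) \<partial>lborel)"
    and gi: "integrable lborel g"
  shows "integrable lborel f" "integral\<^sup>L lborel f = integral\<^sup>L lborel g"
proof -
  have e: "(\<integral>\<^sup>+x. ennreal (f x) \<partial>lborel) = ennreal (integral\<^sup>L lborel g)"
    unfolding eq by (rule nn_integral_eq_integral[OF gi]) (use gn in auto)
  have "0 \<le> integral\<^sup>L lborel g" using gn by (simp add: integral_nonneg_AE)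
  then show "integrable lborel f" "integral\<^sup>L lborel f = integral\<^sup>L lborel g"
    using nn_to_int[OF _ fn e] by auto
qed

lemma int_12:
  fixes h :: "real \<Rightarrow> real"
  assumes [measurable]: "h \<in> borel_measurable borel" and b: "\<And>s. s \<in> {1..2} \<Longrightarrow> \<bar>h s\<bar> \<le> B"
  shows "integrable lborel (\<lambda>s. indicator {1..2} s * h s)"
proof -
  have "integrable lborel (\<lambda>s. indicator {1..2} s *\<^sub>R h s)"
    by (rule integrableI_bounded_set_indicator[where B = B]) (use b in auto)
  then show ?thesis by simp
qed

lemma mm_rep:
  assumes t: "0 < t"
  shows "(\<integral>\<^sup>+s. ennreal (2 * indicator {1..2} s * exp (- s * t)) \<partial>lborel) = ennreal (mm t)"
proof -
  have "((\<lambda>s. exp (- s * t)) has_integral ((- exp (- 2 * t) / t) - (- exp (- 1 * t) / t))) {1..2}"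
  proof (rule fundamental_theorem_of_calculus)
    fix s :: real assume "s \<in> {1..2}"
    show "((\<lambda>s. - exp (- s * t) / t) has_vector_derivative exp (- s * t)) (at s within {1..2})"
      using t by (auto intro!: derivative_eq_intros simp: has_real_derivative_iff_has_vector_derivative[symmetric] field_simps)
  qed simp
  then have "integral\<^sup>N lborel (\<lambda>s. indicator {1..2} s * exp (- s * t)) = ennreal ((exp (- t) - exp (- 2 * t)) / t)"
    by (subst nn_integral_has_integral_lebesgue) (auto simp: diff_divide_distrib)
  then have A: "(\<integral>\<^sup>+s. ennreal 2 * ennreal (indicator {1..2} s * exp (- s * t)) \<partial>lborel) = ennreal 2 * ennreal ((exp (- t) - exp (- 2 * t)) / t)"
    by (subst nn_integral_cmult) auto
  have p: "ennreal (2 * indicator {1..2} s * exp (- s * t)) = ennreal 2 * ennreal (indicator {1..2} s * exp (- s * t))" for s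
    by (subst ennreal_mult[symmetric]) (auto simp: mult.assoc)
  have "0 \<le> exp (- t) - exp (- 2 * t)" using t by simp
  then have m: "ennreal (mm t) = ennreal 2 * ennreal ((exp (- t) - exp (- 2 * t)) / t)"
    using t by (subst ennreal_mult[symmetric]) (auto simp: mm_def)
  show ?thesis unfolding p m A ..
qed

lemma mm_laplace:
  fixes \<phi> :: "real \<Rightarrow> real"
  assumes [measurable]: "\<phi> \<in> borel_measurable borel" and nn: "\<And>t. 0 \<le> \<phi> t"
  shows "(\<integral>\<^sup>+t. ennreal (mm t * \<phi> t) \<partial>lborel)
       = (\<integral>\<^sup>+s. ennreal (2 * indicator {1..2} s) * (\<integral>\<^sup>+t. ennreal (indicator {0<..} t * exp (- s * t) * \<phi> t) \<partial>lborel) \<partial>lborel)"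
proof -
  define K where "K s t = ennreal (2 * indicator {1..2} s * (indicator {0<..} t * exp (- s * t) * \<phi> t))" for s t :: real
  have Km[measurable]: "case_prod K \<in> borel_measurable (lborel \<Otimes>\<^sub>M lborel)"
  proof -
    have "case_prod K = (\<lambda>z. ennreal (2 * (if 1 \<le> fst z \<and> fst z \<le> 2 then 1 else 0) *
       ((if 0 < snd z then 1 else 0) * exp (- fst z * snd z) * \<phi> (snd z))))"
      by (auto simp: K_def indicator_def fun_eq_iff)
    also have "\<dots> \<in> borel_measurable (lborel \<Otimes>\<^sub>M lborel)" by measurable
    finally show ?thesis .
  qed
  have "(\<integral>\<^sup>+t. ennreal (mm t * \<phi> t) \<partial>lborel) = (\<integral>\<^sup>+t. \<integral>\<^sup>+s. K s t \<partial>lborel \<partial>lborel)"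
  proof (rule nn_integral_cong)
    fix t :: real
    show "ennreal (mm t * \<phi> t) = (\<integral>\<^sup>+s. K s t \<partial>lborel)"
    proof (cases "0 < t")
      case True
      have "(\<integral>\<^sup>+s. K s t \<partial>lborel) = (\<integral>\<^sup>+s. ennreal (2 * indicator {1..2} s * exp (- s * t)) * ennreal (\<phi> t) \<partial>lborel)"
        using True nn by (intro nn_integral_cong) (simp add: K_def ennreal_mult''[symmetric] mult.assoc)
      also have "\<dots> = (\<integral>\<^sup>+s. ennreal (2 * indicator {1..2} s * exp (- s * t)) \<partial>lborel) * ennreal (\<phi> t)"
        by (rule nn_integral_multc) auto
      also have "\<dots> = ennreal (mm t) * ennreal (\<phi> t)"
        by (simp only: mm_rep[OF True])
      also have "\<dots> = ennreal (mm t * \<phi> t)" using nn by (simp add: ennreal_mult'')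
      finally show ?thesis ..
    next
      case False
      then show ?thesis by (simp add: K_def mm_def)
    qed
  qed
  also have "\<dots> = (\<integral>\<^sup>+s. \<integral>\<^sup>+t. K s t \<partial>lborel \<partial>lborel)"
    by (rule lborel_pair.Fubini') (use Km in simp)
  also have "\<dots> = (\<integral>\<^sup>+s. ennreal (2 * indicator {1..2} s) * (\<integral>\<^sup>+t. ennreal (indicator {0<..} t * exp (- s * t) * \<phi> t) \<partial>lborel) \<partial>lborel)"
  proof (rule nn_integral_cong)
    fix s :: real
    show "(\<integral>\<^sup>+t. K s t \<partial>lborel) = ennreal (2 * indicator {1..2} s) * (\<integral>\<^sup>+t. ennreal (indicator {0<..} t * exp (- s * t) * \<phi> t) \<partial>lborel)"
      unfolding K_def by (subst nn_integral_cmult[symmetric]) (auto simp: ennreal_mult')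
  qed
  finally show ?thesis .
qed



lemma geom:
  fixes s :: real assumes s: "1 \<le> s"
  shows "(\<Sum>k<N. (-1)^k * (1/s)^(k+1)) - 1/(s+1) = - ((-1/s)^N / (s+1))"
proof (induction N)
  case 0 then show ?case by simp
next
  case (Suc N)
  have "(\<Sum>k<Suc N. (-1)^k * (1/s)^(k+1)) - 1/(s+1) = - ((-1/s)^N / (s+1)) + (-1)^N * (1/s)^(N+1)"
    using Suc by simp
  also have "(-1)^N * (1/s)^(N+1) = (-1/s)^N * (1/s)"
    by (simp add: power_mult_distrib[symmetric] divide_inverse)
  also have "- ((-1/s)^N / (s+1)) + (-1/s)^N * (1/s) = - ((-1/s)^(Suc N) / (s+1))"
    using s by (simp add: field_simps)
  finally show ?case .
qed

lemma lap_pow: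
  assumes s: "s \<in> {1..2}"
  shows "(\<integral>\<^sup>+t. ennreal (indicator {0<..} t * exp (- s * t) * (\<bar>t\<bar>^k / fact k)) \<partial>lborel) = ennreal ((1/s)^(k+1))"
proof -
  have s0: "0 < s" using s by auto
  have "AE t in lborel. ennreal (indicator {0<..} t * exp (- s * t) * (\<bar>t\<bar>^k / fact k))
      = ennreal (1 / fact k) * ennreal (indicator {0..} t * t^k * exp (- s * t))"
    using AE_lborel_singleton[of 0]
    by eventually_elim (auto simp: indicator_def ennreal_mult'[symmetric] mult_ac)
  then have "(\<integral>\<^sup>+t. ennreal (indicator {0<..} t * exp (- s * t) * (\<bar>t\<bar>^k / fact k)) \<partial>lborel)
      = (\<integral>\<^sup>+t. ennreal (1 / fact k) * ennreal (indicator {0..} t * t^k * exp (- s * t)) \<partial>lborel)"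
    by (rule nn_integral_cong_AE)
  also have "\<dots> = ennreal (1 / fact k) * (\<integral>\<^sup>+t. ennreal (indicator {0..} t * t^k * exp (- s * t)) \<partial>lborel)"
    by (rule nn_integral_cmult) simp
  also have "\<dots> = ennreal (1 / fact k) * ennreal (fact k / s^(k+1))"
    by (simp only: gamma_nn[OF s0])
  also have "\<dots> = ennreal ((1/s)^(k+1))"
    by (subst ennreal_mult'[symmetric]) (auto simp: power_one_over)
  finally show ?thesis .
qed

lemma lap_exp:
  assumes s: "s \<in> {1..2}"
  shows "(\<integral>\<^sup>+t. ennreal (indicator {0<..} t * exp (- s * t) * exp (- t)) \<partial>lborel) = ennreal (1/(s+1))"
proof -
  have s0: "0 < s + 1" using s by auto
  have "AE t in lborel. ennreal (indicator {0<..} t * exp (- s * t) * exp (- t))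
      = ennreal (indicator {0..} t * t^0 * exp (- (s + 1) * t))"
    using AE_lborel_singleton[of 0]
    by eventually_elim (auto simp: indicator_def mult_exp_exp algebra_simps)
  then have "(\<integral>\<^sup>+t. ennreal (indicator {0<..} t * exp (- s * t) * exp (- t)) \<partial>lborel)
      = (\<integral>\<^sup>+t. ennreal (indicator {0..} t * t^0 * exp (- (s + 1) * t)) \<partial>lborel)"
    by (rule nn_integral_cong_AE)
  also have "\<dots> = ennreal (1 / (s + 1))" using gamma_nn[OF s0, of 0] by simp
  finally show ?thesis .
qed

lemma c_int:
  shows "integrable lborel (\<lambda>t. mm t * (\<bar>t\<bar>^k / fact k))"
    and "(LINT t|lborel. mm t * (\<bar>t\<bar>^k / fact k)) = (LINT s|lborel. indicator {1..2} s * (2 * (1/s)^(k+1)))"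
proof -
  have gi: "integrable lborel (\<lambda>s::real. indicator {1..2} s * (2 * (1/s)^(k+1)))"
  proof (rule int_12[where B = 2])
    fix s :: real assume "s \<in> {1..2}"
    then have a: "(1/s)^(k+1) \<le> 1" by (intro power_le_one) auto
    have b: "0 \<le> (1/s)^(k+1)" using \<open>s \<in> _\<close> by simp
    show "\<bar>2 * (1/s)^(k+1)\<bar> \<le> 2" using a b by (smt (verit))
  qed simp
  have eq: "(\<integral>\<^sup>+t. ennreal (mm t * (\<bar>t\<bar>^k / fact k)) \<partial>lborel) = (\<integral>\<^sup>+s. ennreal (indicator {1..2} s * (2 * (1/s)^(k+1))) \<partial>lborel)"
    apply (subst mm_laplace)
      apply simp
     apply simp
    apply (rule nn_integral_cong)
    subgoal for s
    proof (cases "s \<in> {1..2}")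
      case True
      show ?thesis by (simp only: lap_pow[OF True]) (subst ennreal_mult'[symmetric], use True in auto)
    qed (auto simp: indicator_def)
    done
  have fn: "0 \<le> mm t * (\<bar>t\<bar>^k / fact k)" for t using mm_bounds(1)[of t] by simp
  have gn: "0 \<le> indicator {1..2} s * (2 * (1/s)^(k+1))" for s :: real by (auto simp: indicator_def)
  show "integrable lborel (\<lambda>t. mm t * (\<bar>t\<bar>^k / fact k))"
    by (rule nn_eq_int(1)[OF _ fn gn eq gi]) simp
  show "(LINT t|lborel. mm t * (\<bar>t\<bar>^k / fact k)) = (LINT s|lborel. indicator {1..2} s * (2 * (1/s)^(k+1)))"
    by (rule nn_eq_int(2)[OF _ fn gn eq gi]) simp
qed

lemma d_int:
  shows "integrable lborel (\<lambda>t. mm t * exp (- t))"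
    and "(LINT t|lborel. mm t * exp (- t)) = (LINT s|lborel. indicator {1..2} s * (2 * (1/(s+1))))"
proof -
  have gi: "integrable lborel (\<lambda>s::real. indicator {1..2} s * (2 * (1/(s+1))))"
  proof (rule int_12[where B = 2])
    fix s :: real assume "s \<in> {1..2}"
    then show "\<bar>2 * (1/(s+1))\<bar> \<le> 2" by (auto simp: divide_le_eq)
  qed simp
  have eq: "(\<integral>\<^sup>+t. ennreal (mm t * exp (- t)) \<partial>lborel) = (\<integral>\<^sup>+s. ennreal (indicator {1..2} s * (2 * (1/(s+1)))) \<partial>lborel)"
    apply (subst mm_laplace)
      apply simp
     apply simp
    apply (rule nn_integral_cong)
    subgoal for s
    proof (cases "s \<in> {1..2}")
      case True
      show ?thesis by (simp only: lap_exp[OF True]) (subst ennreal_mult'[symmetric], use True in auto)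
    qed (auto simp: indicator_def)
    done
  have fn: "0 \<le> mm t * exp (- t)" for t using mm_bounds(1)[of t] by simp
  have gn: "0 \<le> indicator {1..2} s * (2 * (1/(s+1)))" for s :: real by (auto simp: indicator_def)
  show "integrable lborel (\<lambda>t. mm t * exp (- t))"
    by (rule nn_eq_int(1)[OF _ fn gn eq gi]) simp
  show "(LINT t|lborel. mm t * exp (- t)) = (LINT s|lborel. indicator {1..2} s * (2 * (1/(s+1))))"
    by (rule nn_eq_int(2)[OF _ fn gn eq gi]) simp
qed



lemma g_int: "integrable lborel (\<lambda>s::real. indicator {1..2} s * (2 * (1/s)^(k+1)))"
proof (rule int_12[where B = 2])
  fix s :: real assume "s \<in> {1..2}"
  then have a: "(1/s)^(k+1) \<le> 1" by (intro power_le_one) auto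
  have b: "0 \<le> (1/s)^(k+1)" using \<open>s \<in> _\<close> by simp
  show "\<bar>2 * (1/s)^(k+1)\<bar> \<le> 2" using a b by (smt (verit))
qed simp

lemma ge_int: "integrable lborel (\<lambda>s::real. indicator {1..2} s * (2 * (1/(s+1))))"
proof (rule int_12[where B = 2])
  fix s :: real assume "s \<in> {1..2}"
  then show "\<bar>2 * (1/(s+1))\<bar> \<le> 2" by (auto simp: divide_le_eq)
qed simp

lemma mm_U_eq: "mm t * (U N t - exp (- t)) = (\<Sum>k<N. (-1)^k * (mm t * (\<bar>t\<bar>^k / fact k))) - mm t * exp (- t)"
proof (cases "0 < t")
  case True
  have "mm t * U N t = (\<Sum>k<N. (-1)^k * (mm t * (\<bar>t\<bar>^k / fact k)))"
    unfolding U_def sum_distrib_left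
  proof (intro sum.cong refl)
    fix k assume "k \<in> {..<N}"
    have e: "(-t)^k = (-1)^k * \<bar>t\<bar>^k" using True by (subst power_minus) simp
    show "mm t * ((- t)^k / fact k) = (-1)^k * (mm t * (\<bar>t\<bar>^k / fact k))"
      unfolding e by (metis mult.left_commute times_divide_eq_right)
  qed
  then show ?thesis by (simp add: right_diff_distrib)
next
  case False then show ?thesis by (simp add: mm_def)
qed



lemma lin_int:
  fixes f :: "nat \<Rightarrow> real \<Rightarrow> real" and g :: "real \<Rightarrow> real"
  assumes fi: "\<And>k. integrable lborel (f k)" and gi: "integrable lborel g"
  shows "(LINT x|lborel. (\<Sum>k<N. c k * f k x) - g x) = (\<Sum>k<N. c k * integral\<^sup>L lborel (f k)) - integral\<^sup>L lborel g"
proof -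
  have i1: "integrable lborel (\<lambda>x. \<Sum>k<N. c k * f k x)"
    by (intro Bochner_Integration.integrable_sum integrable_mult_right fi)
  have "(LINT x|lborel. (\<Sum>k<N. c k * f k x) - g x) = (LINT x|lborel. (\<Sum>k<N. c k * f k x)) - integral\<^sup>L lborel g"
    by (rule Bochner_Integration.integral_diff[OF i1 gi])
  also have "(LINT x|lborel. (\<Sum>k<N. c k * f k x)) = (\<Sum>k<N. LINT x|lborel. c k * f k x)"
    by (rule Bochner_Integration.integral_sum) (intro integrable_mult_right fi)
  also have "\<dots> = (\<Sum>k<N. c k * integral\<^sup>L lborel (f k))"
    by (intro sum.cong refl) simp
  finally show ?thesis .
qed

lemma main_conv:
  shows "\<And>N. integrable lborel (\<lambda>t. mm t * (U N t - exp (- t)))"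
    and "(\<lambda>N. LINT t|lborel. mm t * (U N t - exp (- t))) \<longlonglongrightarrow> 0"
proof -
  fix N
  show "integrable lborel (\<lambda>t. mm t * (U N t - exp (- t)))"
    unfolding mm_U_eq
    by (intro Bochner_Integration.integrable_diff Bochner_Integration.integrable_sum integrable_mult_right c_int d_int)
next
  define h where "h N s = indicator {1..2} s * (2 * (- ((-1/s)^N / (s+1))))" for N and s :: real
  have eqN: "(LINT t|lborel. mm t * (U N t - exp (- t))) = (LINT s|lborel. h N s)" for N
  proof -
    have "(LINT t|lborel. mm t * (U N t - exp (- t)))
        = (\<Sum>k<N. (-1)^k * (LINT t|lborel. mm t * (\<bar>t\<bar>^k / fact k))) - (LINT t|lborel. mm t * exp (- t))"
      unfolding mm_U_eq
      by (rule lin_int[where f = "\<lambda>k t. mm t * (\<bar>t\<bar>^k / fact k)" and g = "\<lambda>t. mm t * exp (- t)", OF c_int(1) d_int(1)])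
    also have "\<dots> = (\<Sum>k<N. (-1)^k * (LINT s|lborel. indicator {1..2} s * (2 * (1/s)^(k+1))))
                     - (LINT s|lborel. indicator {1..2} s * (2 * (1/(s+1))))"
      by (simp only: c_int(2) d_int(2))
    also have "\<dots> = (LINT s|lborel. (\<Sum>k<N. (-1)^k * (indicator {1..2} s * (2 * (1/s)^(k+1))))
                     - indicator {1..2} s * (2 * (1/(s+1))))"
      by (rule lin_int[where f = "\<lambda>k s. indicator {1..2} s * (2 * (1/s)^(k+1))" and g = "\<lambda>s. indicator {1..2} s * (2 * (1/(s+1)))", OF g_int ge_int, symmetric])
    also have "\<dots> = (LINT s|lborel. h N s)"
    proof (rule Bochner_Integration.integral_cong)
      fix s :: real
      show "(\<Sum>k<N. (-1)^k * (indicator {1..2} s * (2 * (1/s)^(k+1)))) - indicator {1..2} s * (2 * (1/(s+1))) = h N s"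
      proof (cases "s \<in> {1..2}")
        case True
        have "(\<Sum>k<N. (-1)^k * (indicator {1..2} s * (2 * (1/s)^(k+1)))) - indicator {1..2} s * (2 * (1/(s+1)))
            = 2 * ((\<Sum>k<N. (-1)^k * (1/s)^(k+1)) - 1/(s+1))"
          using True by (simp add: sum_distrib_left right_diff_distrib mult_ac)
        also have "\<dots> = h N s" using True geom[of s N] by (simp add: h_def)
        finally show ?thesis .
      qed (simp add: h_def)
    qed simp
    finally show ?thesis .
  qed
  have lim: "AE s in lborel. (\<lambda>N. h N s) \<longlonglongrightarrow> 0"
    using AE_lborel_singleton[of 1]
  proof eventually_elim
    case (elim s)
    show ?case
    proof (cases "s \<in> {1..2}")
      case True
      then have "norm (-1/s) < 1" using elim by (auto simp: abs_if divide_less_eq)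
      then have L: "(\<lambda>N. (-1/s)^N) \<longlonglongrightarrow> 0" by (rule LIMSEQ_power_zero)
      have "(\<lambda>N. indicator {1..2} s * (2 * (- ((-1/s)^N / (s+1))))) \<longlonglongrightarrow> indicator {1..2} s * (2 * (- (0 / (s+1))))"
        by (intro tendsto_mult tendsto_const tendsto_minus tendsto_divide L) (use True in auto)
      then show ?thesis by (simp add: h_def)
    qed (simp add: h_def)
  qed
  have bnd: "AE s in lborel. norm (h N s) \<le> indicator {1..2} s * 2" for N
  proof (intro AE_I2)
    fix s :: real
    show "norm (h N s) \<le> indicator {1..2} s * 2"
    proof (cases "s \<in> {1..2}")
      case True
      define X where "X = (-1/s)^N"
      have hx: "h N s = 2 * (- (X / (s+1)))" using True by (simp add: h_def X_def)
      have x1: "\<bar>X\<bar> \<le> 1" unfolding X_def using True by (simp add: power_abs power_le_one)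
      then have x2: "\<bar>X\<bar> / (s+1) \<le> 1" using True by (simp add: divide_le_eq)
      have "norm (h N s) = 2 * (\<bar>X\<bar> / (s+1))" unfolding hx using True by (simp add: abs_mult abs_div)
      moreover have "indicator {1..2} s * 2 = (2::real)" using True by simp
      ultimately show ?thesis using x2 by linarith
    qed (simp add: h_def)
  qed
  have wi: "integrable lborel (\<lambda>s::real. indicator {1..2} s * (2::real))"
    by (rule int_12[where B = 2]) auto
  have "(\<lambda>N. integral\<^sup>L lborel (h N)) \<longlonglongrightarrow> integral\<^sup>L lborel (\<lambda>s::real. 0::real)"
    by (rule integral_dominated_convergence[OF _ _ wi lim bnd]) (auto simp: h_def)
  then show "(\<lambda>N. LINT t|lborel. mm t * (U N t - exp (- t))) \<longlonglongrightarrow> 0"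
    by (simp add: eqN)
qed



lemma neg_pow: "(- t)^n = (-1)^n * (t::real)^n"
proof -
  have "(- t)^n = ((-1) * t)^n" by simp
  also have "\<dots> = (-1)^n * t^n" by (rule power_mult_distrib)
  finally show ?thesis .
qed

lemma psum_eq: "(\<Sum>n<N. (-1)^n / fact (n+1) * (Wt t * t^n)) = (Wt t / t) * (1 - U (Suc N) t)"
proof (cases "t = 0")
  case True then show ?thesis by (simp add: Wt_def)
next
  case False
  show ?thesis
  proof (induction N)
    case 0 then show ?case by (simp add: U_def)
  next
    case (Suc N)
    have US: "U (Suc (Suc N)) t = U (Suc N) t + (- t)^(Suc N) / fact (Suc N)"
      by (simp add: U_def)
    have key: "(-1)^N / fact (N+1) * (Wt t * t^N) = - (Wt t / t) * ((- t)^(Suc N) / fact (Suc N))"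
    proof -
      have "(- t)^(Suc N) = - t * ((-1)^N * t^N)" by (simp only: power_Suc neg_pow[of t N])
      then show ?thesis using False by (simp add: field_simps)
    qed
    have "(\<Sum>n<Suc N. (-1)^n / fact (n+1) * (Wt t * t^n))
        = (\<Sum>n<N. (-1)^n / fact (n+1) * (Wt t * t^n)) + (-1)^N / fact (N+1) * (Wt t * t^N)"
      by (simp only: sum.lessThan_Suc)
    also have "\<dots> = (Wt t / t) * (1 - U (Suc N) t) + (- (Wt t / t) * ((- t)^(Suc N) / fact (Suc N)))"
      by (simp only: Suc.IH key)
    also have "\<dots> = (Wt t / t) * (1 - U (Suc (Suc N)) t)"
      unfolding US by (simp add: algebra_simps)
    finally show ?case .
  qed
qed

lemma f_neg1_eq: "f_neg1 = (\<lambda>z. (\<lambda>t. 1 / t) (- ln (fst z * snd z)) / (fst z * snd z))"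
  by (auto simp: f_neg1_def fun_eq_iff mult.commute)

lemma f_n_eq: "f_n n = (\<lambda>z. (\<lambda>t. t ^ n) (- ln (fst z * snd z)) / (fst z * snd z))"
  by (auto simp: f_n_def fun_eq_iff)



theorem theorem4:
  shows "set_integrable lborel T_set f_neg1
       \<and> (\<forall>n. set_integrable lborel T_set (f_n n))
       \<and> interval_lebesgue_integrable lborel 0 1 (\<lambda>x. li (x - x\<^sup>2) / x)
       \<and> (\<lambda>n. (-1) ^ n * I_n n / fact (n + 1))
            sums (I_neg1 - (LBINT x=0..1. li (x - x\<^sup>2) / x) - 1)"
proof (intro conjI allI)
  have m1: "(\<lambda>t::real. 1 / t) \<in> borel_measurable borel" by measurable
  have mn: "(\<lambda>t::real. t ^ n) \<in> borel_measurable borel" for n by measurable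
  show "set_integrable lborel T_set f_neg1"
    unfolding f_neg1_eq transfer(1)[OF m1] using integrable_W_inv .
  show "set_integrable lborel T_set (f_n n)" for n
    unfolding f_n_eq transfer(1)[OF mn] using integrable_W_pow .
  show "interval_lebesgue_integrable lborel 0 1 (\<lambda>x. li (x - x\<^sup>2) / x)" by (rule LI(1))
  have In: "I_n n = (LINT t|lborel. Wt t * t^n)" for n
    unfolding I_n_def f_n_eq transfer(2)[OF mn] ..
  have I1: "I_neg1 = (LINT t|lborel. Wt t * (1 / t))"
    unfolding I_neg1_def f_neg1_eq transfer(2)[OF m1] ..
  define A where "A t = Wt t * (1 / t) - Wt t * hl t" for t
  have Ai: "integrable lborel A" unfolding A_def
    by (intro Bochner_Integration.integrable_diff integrable_W_inv LI(2))
  have target: "I_neg1 - (LBINT x=0..1. li (x - x\<^sup>2) / x) - 1 = integral\<^sup>L lborel A"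
  proof -
    have d: "integral\<^sup>L lborel A = (LINT t|lborel. Wt t * (1 / t)) - (LINT t|lborel. Wt t * hl t)"
      unfolding A_def by (rule Bochner_Integration.integral_diff[OF integrable_W_inv LI(2)])
    show ?thesis using d LI(3) I1 by linarith
  qed
  define E where "E N t = mm t * (U (Suc N) t - exp (- t)) + rho t * (U (Suc N) t - exp (- t))" for N t
  have Ei: "integrable lborel (E N)" for N
    unfolding E_def by (intro Bochner_Integration.integrable_add main_conv(1) rho_conv(1))
  have ptw: "(\<Sum>n<N. (-1)^n / fact (n+1) * (Wt t * t^n)) = A t - E N t" for N t
  proof (cases "0 < t")
    case True
    have "Wt t / t = mm t + rho t" by (simp add: rho_def)
    moreover have "A t = (Wt t / t) * (1 - exp (- t))"
      using True by (simp add: A_def hl_def field_simps)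
    ultimately show ?thesis unfolding psum_eq E_def by (simp add: algebra_simps)
  next
    case False
    then have "Wt t = 0" by (simp add: Wt_def)
    moreover have "mm t = 0" "rho t = 0" using False by (simp_all add: mm_def rho_zero)
    ultimately show ?thesis by (simp add: A_def E_def)
  qed
  have psum: "(\<Sum>n<N. (-1) ^ n * I_n n / fact (n + 1)) = integral\<^sup>L lborel A - integral\<^sup>L lborel (E N)" for N
  proof -
    have "(\<Sum>n<N. (-1) ^ n * I_n n / fact (n + 1)) = (\<Sum>n<N. LINT t|lborel. (-1)^n / fact (n+1) * (Wt t * t^n))"
      unfolding In by (intro sum.cong refl) simp
    also have "\<dots> = (LINT t|lborel. (\<Sum>n<N. (-1)^n / fact (n+1) * (Wt t * t^n)))"
      by (rule Bochner_Integration.integral_sum[symmetric]) (intro integrable_mult_right integrable_W_pow)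
    also have "\<dots> = (LINT t|lborel. A t - E N t)" by (simp only: ptw)
    also have "\<dots> = integral\<^sup>L lborel A - integral\<^sup>L lborel (E N)"
      by (rule Bochner_Integration.integral_diff[OF Ai Ei])
    finally show ?thesis .
  qed
  have EN: "(\<lambda>N. integral\<^sup>L lborel (E N)) \<longlonglongrightarrow> 0"
  proof -
    have "integral\<^sup>L lborel (E N) = (LINT t|lborel. mm t * (U (Suc N) t - exp (- t))) + (LINT t|lborel. rho t * (U (Suc N) t - exp (- t)))" for N
      unfolding E_def by (rule Bochner_Integration.integral_add[OF main_conv(1) rho_conv(1)])
    moreover have "(\<lambda>N. (LINT t|lborel. mm t * (U (Suc N) t - exp (- t))) + (LINT t|lborel. rho t * (U (Suc N) t - exp (- t)))) \<longlonglongrightarrow> 0 + 0"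
      by (intro tendsto_add LIMSEQ_Suc[OF main_conv(2)] LIMSEQ_Suc[OF rho_conv(2)])
    ultimately show ?thesis by simp
  qed
  have "(\<lambda>N. integral\<^sup>L lborel A - integral\<^sup>L lborel (E N)) \<longlonglongrightarrow> integral\<^sup>L lborel A - 0"
    by (intro tendsto_diff tendsto_const EN)
  then show "(\<lambda>n. (-1) ^ n * I_n n / fact (n + 1)) sums (I_neg1 - (LBINT x=0..1. li (x - x\<^sup>2) / x) - 1)"
    unfolding sums_def target psum by simp
qed


end
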